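(* Let $Q$ be a finite connected acyclic quiver and let $\alpha_1,\dots,\alpha_r$ be pairwise ext-orthogonal positive Schur roots. Let $\alpha_1'\neq\alpha_1$ be a positive Schur root which is ext-orthogonal to each of $\alpha_2,\dots,\alpha_r$, and assume $\operatorname{ext}(\alpha_1,\alpha_1')\neq0$. Then every Schur root $d_j$ occurring in the generic decomposition $\alpha_1+\alpha_1'=d_1\oplus\cdots\oplus d_s$ is different from both $\alpha_1$ and $\alpha_1'$ and is ext-orthogonal to each of $\alpha_2,\dots,\alpha_r$.
   Context: $k$ is an algebraically closed field of characteristic $0$, $Q$ has vertex set $Q_0=\{1,\dots,n\}$. For $a,b\in\mathbb{N}^n$, $\operatorname{ext}(a,b)$ is the generic (minimal) value of $\dim\operatorname{Ext}^1_{kQ}(M,N)$ over representations of dimension vectors $a,b$; $a,b$ are ext-orthogonal if $\operatorname{ext}(a,b)=\operatorname{ext}(b,a)=0$. A (positive) Schur root is a nonzero $d\in\mathbb{N}^n$ for which some representation of dimension vector $d$ has endomorphism ring $k$. Generic decomposition (Kac): every $d\in\mathbb{N}^n$ has a unique decomposition $d=d_1\oplus\cdots\oplus d_s$ (a sum, with multiplicities) into Schur roots such that direct sums of representations of dimension vectors $d_1,\dots,d_s$ form a dense open subset of the representations of dimension vector $d$; equivalently, $\operatorname{ext}(d_i,d_j)=0$ for all $i\neq j$. *)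

theory Defs
  imports Main "HOL-Library.Function_Algebras" "HOL-Computational_Algebra.Polynomial"
begin

(* A quiver Q is given by a number n of vertices (vertex set {0..<n}) and a list
   arr of arrows; arrow number a (a < length arr) goes from fst (arr!a) to snd (arr!a).
   Multiple arrows are allowed (repeated list entries).
   A representation of dimension vector d is M :: nat => nat => nat => 'k, where
   M a i j is entry (i,j) of the (d (target) x d (source)) matrix of arrow a;
   entries outside the range are required to be 0.
   Families of linear maps (phi_v : k^{a v} -> k^{b v})_v are encoded the same way
   (phi v i j = entry (i,j) of a (b v x a v) matrix). *)

definition alg_closed :: "'k::field itself \<Rightarrow> bool" where
  "alg_closed _ \<longleftrightarrow> (\<forall>p :: 'k poly. degree p > 0 \<longrightarrow> (\<exists>x. poly p x = 0))"

definition quiver :: "nat \<Rightarrow> (nat \<times> nat) list \<Rightarrow> bool" where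
  "quiver n arr \<longleftrightarrow> (\<forall>(s,t)\<in>set arr. s < n \<and> t < n)"

definition quiver_connected :: "nat \<Rightarrow> (nat \<times> nat) list \<Rightarrow> bool" where
  "quiver_connected n arr \<longleftrightarrow> 0 < n \<and>
     (\<forall>u<n. \<forall>v<n. (u, v) \<in> (set arr \<union> (set arr)\<inverse>)\<^sup>*)"

definition quiver_acyclic :: "(nat \<times> nat) list \<Rightarrow> bool" where
  "quiver_acyclic arr \<longleftrightarrow> acyclic (set arr)"

definition fscale :: "'k::field \<Rightarrow> (nat \<Rightarrow> nat \<Rightarrow> nat \<Rightarrow> 'k) \<Rightarrow> (nat \<Rightarrow> nat \<Rightarrow> nat \<Rightarrow> 'k)" where
  "fscale c f = (\<lambda>v i j. c * f v i j)"

definition kdim :: "(nat \<Rightarrow> nat \<Rightarrow> nat \<Rightarrow> 'k::field) set \<Rightarrow> nat" where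
  "kdim S = vector_space.dim fscale S"

definition dimvec :: "nat \<Rightarrow> (nat \<Rightarrow> nat) \<Rightarrow> bool" where
  "dimvec n d \<longleftrightarrow> (\<forall>v\<ge>n. d v = 0)"

definition is_rep :: "(nat \<times> nat) list \<Rightarrow> (nat \<Rightarrow> nat) \<Rightarrow> (nat \<Rightarrow> nat \<Rightarrow> nat \<Rightarrow> 'k::field) \<Rightarrow> bool" where
  "is_rep arr d M \<longleftrightarrow>
     (\<forall>a i j. \<not> (a < length arr \<and> i < d (snd (arr!a)) \<and> j < d (fst (arr!a))) \<longrightarrow> M a i j = 0)"

definition vmaps :: "nat \<Rightarrow> (nat \<Rightarrow> nat) \<Rightarrow> (nat \<Rightarrow> nat) \<Rightarrow> (nat \<Rightarrow> nat \<Rightarrow> nat \<Rightarrow> 'k::field) set" where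
  "vmaps n a b = {\<phi>. \<forall>v i j. \<not> (v < n \<and> i < b v \<and> j < a v) \<longrightarrow> \<phi> v i j = 0}"

(* Ringel's map  delta(phi)_alpha = phi_{t alpha} M_alpha - N_alpha phi_{s alpha},
   from  (+)_v Hom(k^{a v}, k^{b v})  to  (+)_alpha Hom(k^{a (s alpha)}, k^{b (t alpha)}) *)
definition delta :: "(nat \<times> nat) list \<Rightarrow> (nat \<Rightarrow> nat) \<Rightarrow> (nat \<Rightarrow> nat) \<Rightarrow>
    (nat \<Rightarrow> nat \<Rightarrow> nat \<Rightarrow> 'k::field) \<Rightarrow> (nat \<Rightarrow> nat \<Rightarrow> nat \<Rightarrow> 'k) \<Rightarrow>
    (nat \<Rightarrow> nat \<Rightarrow> nat \<Rightarrow> 'k) \<Rightarrow> (nat \<Rightarrow> nat \<Rightarrow> nat \<Rightarrow> 'k)" where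
  "delta arr a b M N \<phi> = (\<lambda>al i j.
     if al < length arr \<and> i < b (snd (arr!al)) \<and> j < a (fst (arr!al)) then
       (\<Sum>l<a (snd (arr!al)). \<phi> (snd (arr!al)) i l * M al l j)
       - (\<Sum>l<b (fst (arr!al)). N al i l * \<phi> (fst (arr!al)) l j)
     else 0)"

(* Hom_{kQ}(M,N) = kernel of delta *)
definition homs :: "nat \<Rightarrow> (nat \<times> nat) list \<Rightarrow> (nat \<Rightarrow> nat) \<Rightarrow> (nat \<Rightarrow> nat) \<Rightarrow>
    (nat \<Rightarrow> nat \<Rightarrow> nat \<Rightarrow> 'k::field) \<Rightarrow> (nat \<Rightarrow> nat \<Rightarrow> nat \<Rightarrow> 'k) \<Rightarrow>
    (nat \<Rightarrow> nat \<Rightarrow> nat \<Rightarrow> 'k) set" where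
  "homs n arr a b M N = {\<phi> \<in> vmaps n a b. delta arr a b M N \<phi> = 0}"

(* dim Ext^1_{kQ}(M,N) = dim coker delta *)
definition ext_dim :: "nat \<Rightarrow> (nat \<times> nat) list \<Rightarrow> (nat \<Rightarrow> nat) \<Rightarrow> (nat \<Rightarrow> nat) \<Rightarrow>
    (nat \<Rightarrow> nat \<Rightarrow> nat \<Rightarrow> 'k::field) \<Rightarrow> (nat \<Rightarrow> nat \<Rightarrow> nat \<Rightarrow> 'k) \<Rightarrow> nat" where
  "ext_dim n arr a b M N =
     (\<Sum>al<length arr. a (fst (arr!al)) * b (snd (arr!al)))
     - kdim (delta arr a b M N ` vmaps n a b)"

(* generic (= minimal) value of dim Ext^1 *)
definition ext_gen :: "'k::field itself \<Rightarrow> nat \<Rightarrow> (nat \<times> nat) list \<Rightarrow> (nat \<Rightarrow> nat) \<Rightarrow> (nat \<Rightarrow> nat) \<Rightarrow> nat" where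
  "ext_gen _ n arr a b = (LEAST e. \<exists>(M :: nat \<Rightarrow> nat \<Rightarrow> nat \<Rightarrow> 'k) N.
      is_rep arr a M \<and> is_rep arr b N \<and> e = ext_dim n arr a b M N)"

definition ext_orth :: "'k::field itself \<Rightarrow> nat \<Rightarrow> (nat \<times> nat) list \<Rightarrow> (nat \<Rightarrow> nat) \<Rightarrow> (nat \<Rightarrow> nat) \<Rightarrow> bool" where
  "ext_orth K n arr a b \<longleftrightarrow> ext_gen K n arr a b = 0 \<and> ext_gen K n arr b a = 0"

definition schur_root :: "'k::field itself \<Rightarrow> nat \<Rightarrow> (nat \<times> nat) list \<Rightarrow> (nat \<Rightarrow> nat) \<Rightarrow> bool" where
  "schur_root _ n arr d \<longleftrightarrow> dimvec n d \<and> (\<exists>v<n. d v \<noteq> 0) \<and>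
     (\<exists>M :: nat \<Rightarrow> nat \<Rightarrow> nat \<Rightarrow> 'k. is_rep arr d M \<and>
        homs n arr d d M M = {(\<lambda>v i j. if v < n \<and> i < d v \<and> i = j then c else 0) | c. True})"

(* generic decomposition d = ds 0 (+) ... (+) ds (s-1)  (Kac): Schur roots summing to d
   with ext(ds i, ds j) = 0 for all i <> j *)
definition generic_decomp :: "'k::field itself \<Rightarrow> nat \<Rightarrow> (nat \<times> nat) list \<Rightarrow> (nat \<Rightarrow> nat) \<Rightarrow>
    nat \<Rightarrow> (nat \<Rightarrow> nat \<Rightarrow> nat) \<Rightarrow> bool" where
  "generic_decomp K n arr d s ds \<longleftrightarrow>
     (\<forall>j<s. schur_root K n arr (ds j)) \<and>
     (\<forall>v. (\<Sum>j<s. ds j v) = d v) \<and>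
     (\<forall>i<s. \<forall>j<s. i \<noteq> j \<longrightarrow> ext_gen K n arr (ds i) (ds j) = 0)"

end

theory Submission
  imports Defs "Jordan_Normal_Form.Determinant"
begin


type_synonym 'k fam = "nat \<Rightarrow> nat \<Rightarrow> nat \<Rightarrow> 'k"

inductive pf :: "('k::field_char_0 fam \<Rightarrow> 'k) \<Rightarrow> bool" where
  pf_const: "pf (\<lambda>F. c)"
| pf_var: "pf (\<lambda>F. F a i j)"
| pf_add: "pf f \<Longrightarrow> pf g \<Longrightarrow> pf (\<lambda>F. f F + g F)"
| pf_mult: "pf f \<Longrightarrow> pf g \<Longrightarrow> pf (\<lambda>F. f F * g F)"

lemma pf_minus: "pf f \<Longrightarrow> pf g \<Longrightarrow> pf (\<lambda>F. f F - g F)"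
proof -
  assume "pf f" "pf g"
  then have "pf (\<lambda>F. f F + (\<lambda>F. -1) F * g F)" by (intro pf_add pf_mult pf_const)
  then show ?thesis by simp
qed

lemma pf_sum: "(\<And>x. x \<in> A \<Longrightarrow> pf (f x)) \<Longrightarrow> pf (\<lambda>F. \<Sum>x\<in>A. f x F)"
proof (induction A rule: infinite_finite_induct)
  case (infinite A) then show ?case by (simp add: pf_const)
next
  case empty then show ?case by (simp add: pf_const)
next
  case (insert x A) then show ?case by (simp add: pf_add)
qed

lemma pf_prod: "(\<And>x. x \<in> A \<Longrightarrow> pf (f x)) \<Longrightarrow> pf (\<lambda>F. \<Prod>x\<in>A. f x F)"
proof (induction A rule: infinite_finite_induct)
  case (infinite A) then show ?case by (simp add: pf_const)
next
  case empty then show ?case by (simp add: pf_const)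
next
  case (insert x A) then show ?case by (simp add: pf_mult)
qed

lemma pf_comp: "pf f \<Longrightarrow> (\<And>a i j. pf (\<lambda>F. L F a i j)) \<Longrightarrow> pf (\<lambda>F. f (L F))"
  by (induction f rule: pf.induct) (auto intro: pf.intros)

definition ccurve :: "(nat \<Rightarrow> nat \<Rightarrow> nat \<Rightarrow> 'k::field_char_0 poly) \<Rightarrow> 'k \<Rightarrow> 'k fam" where
  "ccurve p t = (\<lambda>a i j. poly (p a i j) t)"

definition c0 :: "(nat \<Rightarrow> nat \<Rightarrow> nat \<Rightarrow> 'k::field_char_0 poly) \<Rightarrow> 'k fam" where
  "c0 p = (\<lambda>a i j. coeff (p a i j) 0)"
definition c1 :: "(nat \<Rightarrow> nat \<Rightarrow> nat \<Rightarrow> 'k::field_char_0 poly) \<Rightarrow> 'k fam" where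
  "c1 p = (\<lambda>a i j. coeff (p a i j) 1)"

definition fadd :: "'k::field_char_0 fam \<Rightarrow> 'k fam \<Rightarrow> 'k fam" where
  "fadd V W = (\<lambda>a i j. V a i j + W a i j)"

definition line :: "'k::field_char_0 fam \<Rightarrow> 'k fam \<Rightarrow> 'k \<Rightarrow> 'k fam" where
  "line E V t = (\<lambda>a i j. E a i j + t * V a i j)"

lemma pf_struct:
  assumes "pf f"
  shows "\<exists>f1. (\<forall>V. pf (\<lambda>E. f1 E V)) \<and> (\<forall>E V W. f1 E (fadd V W) = f1 E V + f1 E W) \<and>
     (\<forall>p. \<exists>Q. (\<forall>t. f (ccurve p t) = poly Q t) \<and> coeff Q 0 = f (c0 p) \<and> coeff Q 1 = f1 (c0 p) (c1 p))"
  using assms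
proof (induction f rule: pf.induct)
  case (pf_const c)
  show ?case
    by (rule exI[of _ "\<lambda>E V. 0"]) (auto intro!: pf.intros exI[of _ "[:c:]"])
next
  case (pf_var a i j)
  show ?case
    apply (rule exI[of _ "\<lambda>E V. V a i j"])
    apply (auto intro!: pf.intros simp: fadd_def)
    subgoal for p by (rule exI[of _ "p a i j"]) (simp add: ccurve_def c0_def c1_def)
    done
next
  case (pf_add f g)
  then obtain f1 g1 where f1: "(\<forall>V. pf (\<lambda>E. f1 E V)) \<and> (\<forall>E V W. f1 E (fadd V W) = f1 E V + f1 E W) \<and>
     (\<forall>p. \<exists>Q. (\<forall>t. f (ccurve p t) = poly Q t) \<and> coeff Q 0 = f (c0 p) \<and> coeff Q 1 = f1 (c0 p) (c1 p))"
    and g1: "(\<forall>V. pf (\<lambda>E. g1 E V)) \<and> (\<forall>E V W. g1 E (fadd V W) = g1 E V + g1 E W) \<and>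
     (\<forall>p. \<exists>Q. (\<forall>t. g (ccurve p t) = poly Q t) \<and> coeff Q 0 = g (c0 p) \<and> coeff Q 1 = g1 (c0 p) (c1 p))"
    by blast
  show ?case
  proof (rule exI[of _ "\<lambda>E V. f1 E V + g1 E V"], intro conjI allI)
    fix V show "pf (\<lambda>E. f1 E V + g1 E V)" using f1 g1 by (auto intro: pf.intros)
  next
    fix E V W show "f1 E (fadd V W) + g1 E (fadd V W) = f1 E V + g1 E V + (f1 E W + g1 E W)"
      using f1 g1 by (simp add: algebra_simps)
  next
    fix p
    obtain Q1 where Q1: "(\<forall>t. f (ccurve p t) = poly Q1 t) \<and> coeff Q1 0 = f (c0 p) \<and> coeff Q1 1 = f1 (c0 p) (c1 p)"
      using f1 by blast
    obtain Q2 where Q2: "(\<forall>t. g (ccurve p t) = poly Q2 t) \<and> coeff Q2 0 = g (c0 p) \<and> coeff Q2 1 = g1 (c0 p) (c1 p)"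
      using g1 by blast
    show "\<exists>Q. (\<forall>t. f (ccurve p t) + g (ccurve p t) = poly Q t) \<and> coeff Q 0 = f (c0 p) + g (c0 p) \<and>
              coeff Q 1 = f1 (c0 p) (c1 p) + g1 (c0 p) (c1 p)"
      by (rule exI[of _ "Q1 + Q2"]) (use Q1 Q2 in simp)
  qed
next
  case (pf_mult f g)
  then obtain f1 g1 where f1: "(\<forall>V. pf (\<lambda>E. f1 E V)) \<and> (\<forall>E V W. f1 E (fadd V W) = f1 E V + f1 E W) \<and>
     (\<forall>p. \<exists>Q. (\<forall>t. f (ccurve p t) = poly Q t) \<and> coeff Q 0 = f (c0 p) \<and> coeff Q 1 = f1 (c0 p) (c1 p))"
    and g1: "(\<forall>V. pf (\<lambda>E. g1 E V)) \<and> (\<forall>E V W. g1 E (fadd V W) = g1 E V + g1 E W) \<and>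
     (\<forall>p. \<exists>Q. (\<forall>t. g (ccurve p t) = poly Q t) \<and> coeff Q 0 = g (c0 p) \<and> coeff Q 1 = g1 (c0 p) (c1 p))"
    by blast
  show ?case
  proof (rule exI[of _ "\<lambda>E V. f1 E V * g E + f E * g1 E V"], intro conjI allI)
    fix V
    have a: "pf (\<lambda>E. f1 E V)" and b: "pf (\<lambda>E. g1 E V)" using f1 g1 by auto
    show "pf (\<lambda>E. f1 E V * g E + f E * g1 E V)"
      by (rule pf.pf_add[OF pf.pf_mult[OF a pf_mult.hyps(2)] pf.pf_mult[OF pf_mult.hyps(1) b]])
  next
    fix E V W show "f1 E (fadd V W) * g E + f E * g1 E (fadd V W) = f1 E V * g E + f E * g1 E V + (f1 E W * g E + f E * g1 E W)"
      using f1 g1 by (simp add: algebra_simps)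
  next
    fix p
    obtain Q1 where Q1: "(\<forall>t. f (ccurve p t) = poly Q1 t) \<and> coeff Q1 0 = f (c0 p) \<and> coeff Q1 1 = f1 (c0 p) (c1 p)"
      using f1 by blast
    obtain Q2 where Q2: "(\<forall>t. g (ccurve p t) = poly Q2 t) \<and> coeff Q2 0 = g (c0 p) \<and> coeff Q2 1 = g1 (c0 p) (c1 p)"
      using g1 by blast
    have c1m: "coeff (Q1 * Q2) 1 = coeff Q1 0 * coeff Q2 1 + coeff Q1 1 * coeff Q2 0"
      by (simp add: coeff_mult)
    show "\<exists>Q. (\<forall>t. f (ccurve p t) * g (ccurve p t) = poly Q t) \<and> coeff Q 0 = f (c0 p) * g (c0 p) \<and>
              coeff Q 1 = f1 (c0 p) (c1 p) * g (c0 p) + f (c0 p) * g1 (c0 p) (c1 p)"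
      by (rule exI[of _ "Q1 * Q2"]) (use Q1 Q2 c1m in \<open>simp add: coeff_mult_0 algebra_simps\<close>)
  qed
qed

lemma poly_unique:
  fixes Q Q' :: "'k::field_char_0 poly"
  shows "(\<And>t. poly Q t = poly Q' t) \<Longrightarrow> Q = Q'"
  using poly_eq_poly_eq_iff by blast

definition Dd :: "('k::field_char_0 fam \<Rightarrow> 'k) \<Rightarrow> 'k fam \<Rightarrow> 'k fam \<Rightarrow> 'k" where
  "Dd f E V = coeff (THE Q. \<forall>t. f (line E V t) = poly Q t) 1"

lemma line_ccurve: "line E V t = ccurve (\<lambda>a i j. [:E a i j, V a i j:]) t"
  by (simp add: line_def ccurve_def)

lemma c0_lin: "c0 (\<lambda>a i j. [:E a i j, V a i j:]) = E" by (simp add: c0_def)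
lemma c1_lin: "c1 (\<lambda>a i j. [:E a i j, V a i j:]) = V" by (simp add: c1_def)

lemma the_poly:
  fixes g :: "'k::field_char_0 \<Rightarrow> 'k"
  assumes "\<forall>t. g t = poly Q t"
  shows "(THE Q. \<forall>t. g t = poly Q t) = Q"
proof (rule the_equality)
  show "\<forall>t. g t = poly Q t" by fact
next
  fix Q' assume "\<forall>t. g t = poly Q' t"
  then show "Q' = Q" using assms by (intro poly_unique) simp
qed

lemma pf_struct2:
  assumes "pf f"
  shows "\<exists>f1. (\<forall>V. pf (\<lambda>E. f1 E V)) \<and> (\<forall>E V W. f1 E (fadd V W) = f1 E V + f1 E W) \<and>
     (\<forall>p. \<exists>Q. (\<forall>t. f (ccurve p t) = poly Q t) \<and> coeff Q 0 = f (c0 p) \<and> coeff Q 1 = f1 (c0 p) (c1 p))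
     \<and> (\<forall>E V. Dd f E V = f1 E V)"
proof -
  obtain f1 where f1: "(\<forall>V. pf (\<lambda>E. f1 E V)) \<and> (\<forall>E V W. f1 E (fadd V W) = f1 E V + f1 E W) \<and>
     (\<forall>p. \<exists>Q. (\<forall>t. f (ccurve p t) = poly Q t) \<and> coeff Q 0 = f (c0 p) \<and> coeff Q 1 = f1 (c0 p) (c1 p))"
    using pf_struct[OF assms] by blast
  have "Dd f E V = f1 E V" for E V
  proof -
    obtain Q where Q0: "(\<forall>t. f (ccurve (\<lambda>a i j. [:E a i j, V a i j:]) t) = poly Q t)"
      "coeff Q 1 = f1 (c0 (\<lambda>a i j. [:E a i j, V a i j:])) (c1 (\<lambda>a i j. [:E a i j, V a i j:]))"
      using f1 by blast
    have Q2: "coeff Q 1 = f1 E V" using Q0(2) by (simp only: c0_lin c1_lin)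
    note Q = Q0(1) Q2
    have "\<forall>t. f (line E V t) = poly Q t" unfolding line_ccurve by (rule Q(1))
    then have "(THE Q. \<forall>t. f (line E V t) = poly Q t) = Q"
      by (rule the_poly)
    then show ?thesis using Q by (simp add: Dd_def)
  qed
  then show ?thesis using f1 by blast
qed

lemma pf_Dd: "pf f \<Longrightarrow> pf (\<lambda>E. Dd f E V)"
  using pf_struct2 by fastforce

lemma Dd_add: "pf f \<Longrightarrow> Dd f E (fadd V W) = Dd f E V + Dd f E W"
  using pf_struct2 by metis

lemma pf_curve: "pf f \<Longrightarrow> \<exists>Q. (\<forall>t. f (ccurve p t) = poly Q t) \<and> coeff Q 0 = f (c0 p) \<and> coeff Q 1 = Dd f (c0 p) (c1 p)"
  using pf_struct2 by metis

lemma pf_line: "pf f \<Longrightarrow> \<exists>Q. \<forall>t. f (line E V t) = poly Q t"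
  using pf_curve[of f "\<lambda>a i j. [:E a i j, V a i j:]"] by (auto simp: line_ccurve)

lemma Dd_curve_zero:
  assumes "pf f" "\<And>t. f (ccurve p t) = 0"
  shows "Dd f (c0 p) (c1 p) = 0"
proof -
  obtain Q where Q: "\<forall>t. f (ccurve p t) = poly Q t" "coeff Q 1 = Dd f (c0 p) (c1 p)"
    using pf_curve[OF assms(1)] by blast
  have "Q = 0" using Q assms(2) by (intro poly_unique) simp
  then show ?thesis using Q by simp
qed

lemma Dd_line_zero:
  assumes "pf f" "\<And>t. f (line E V t) = 0"
  shows "Dd f E V = 0"
  using Dd_curve_zero[of f "\<lambda>a i j. [:E a i j, V a i j:]"] assms
  by (simp add: line_ccurve c0_lin c1_lin)

lemma coeff_pcompose_lin: "coeff (pcompose p [:t, 1:]) 1 = poly (pderiv p) (t::'k::field_char_0)"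
proof (induction p)
  case 0 then show ?case by simp
next
  case (pCons a p)
  have "coeff (pcompose (pCons a p) [:t, 1:]) 1 = coeff ([:t, 1:] * pcompose p [:t, 1:]) 1"
    by (simp add: pcompose_pCons)
  also have "\<dots> = t * coeff (pcompose p [:t, 1:]) 1 + coeff (pcompose p [:t, 1:]) 0"
    by (simp add: coeff_mult)
  also have "coeff (pcompose p [:t, 1:]) 0 = poly p t"
    by (simp flip: poly_0_coeff_0 add: poly_pcompose)
  finally show ?case using pCons by (simp add: pderiv_pCons algebra_simps)
qed

lemma line_line: "line (line E w t) w s = line E w (t + s)"
  by (simp add: line_def algebra_simps)

lemma Dd_line_deriv:
  assumes "pf g" "\<forall>t. g (line E w t) = poly Q t"
  shows "Dd g (line E w t) w = poly (pderiv Q) t"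
proof -
  have "\<forall>s. g (line (line E w t) w s) = poly (pcompose Q [:t, 1:]) s"
    using assms(2) by (simp add: line_line poly_pcompose algebra_simps)
  then have "(THE Q'. \<forall>s. g (line (line E w t) w s) = poly Q' s) = pcompose Q [:t, 1:]"
    by (rule the_poly)
  then show ?thesis unfolding Dd_def by (simp only: coeff_pcompose_lin)
qed

primrec iterD :: "'k::field_char_0 fam \<Rightarrow> ('k fam \<Rightarrow> 'k) \<Rightarrow> nat \<Rightarrow> 'k fam \<Rightarrow> 'k" where
  "iterD w f 0 = f"
| "iterD w f (Suc k) = (\<lambda>E. Dd (iterD w f k) E w)"

lemma pf_iterD: "pf f \<Longrightarrow> pf (iterD w f k)"
  by (induction k) (auto intro: pf_Dd)

lemma iterD_line:
  assumes "pf f" "\<forall>t. f (line E w t) = poly Q t"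
  shows "iterD w f k (line E w t) = poly ((pderiv ^^ k) Q) t"
  using assms
proof (induction k arbitrary: t)
  case 0 then show ?case by simp
next
  case (Suc k)
  have "\<forall>t. iterD w f k (line E w t) = poly ((pderiv ^^ k) Q) t" using Suc by blast
  then have "Dd (iterD w f k) (line E w t) w = poly (pderiv ((pderiv ^^ k) Q)) t"
    by (intro Dd_line_deriv pf_iterD Suc.prems)
  then show ?case by simp
qed

lemma poly_pderiv_iter_0: "poly ((pderiv ^^ k) Q) 0 = fact k * coeff Q k"
proof (induction k arbitrary: Q)
  case 0 then show ?case by (simp add: poly_0_coeff_0)
next
  case (Suc k)
  have "(pderiv ^^ Suc k) Q = (pderiv ^^ k) (pderiv Q)" by (simp add: funpow_Suc_right del: funpow.simps)
  then show ?case using Suc by (simp add: coeff_pderiv algebra_simps)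
qed

lemma taylor_zero:
  fixes f :: "'k::field_char_0 fam \<Rightarrow> 'k"
  assumes "pf f" "\<forall>k. iterD w f k E = 0"
  shows "f (line E w 1) = 0"
proof -
  obtain Q where Q: "\<forall>t. f (line E w t) = poly Q t" using pf_line[OF assms(1)] by blast
  have le0: "line E w 0 = E" by (simp add: line_def)
  have "coeff Q k = 0" for k
  proof -
    have "poly ((pderiv ^^ k) Q) 0 = 0" using iterD_line[OF assms(1) Q, of k 0] assms(2) le0 by simp
    then show ?thesis by (simp add: poly_pderiv_iter_0)
  qed
  then have "Q = 0" by (simp add: poly_eq_iff)
  then show ?thesis using Q by simp
qed

definition lclosed :: "'k::field_char_0 fam set \<Rightarrow> bool" where
  "lclosed B \<longleftrightarrow> (\<forall>E\<in>B. \<forall>E'\<in>B. \<forall>t. line E (\<lambda>a i j. E' a i j - E a i j) t \<in> B)"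

lemma line_end: "line E (\<lambda>a i j. E' a i j - E a i j) 1 = E'"
  by (simp add: line_def)
lemma line_start: "line E V 0 = E"
  by (simp add: line_def)

lemma vanish_open:
  fixes g0 g :: "'k::field_char_0 fam \<Rightarrow> 'k"
  assumes "lclosed B" "pf g0" "pf g" "F0 \<in> B" "g0 F0 \<noteq> 0"
    "\<forall>F\<in>B. g0 F \<noteq> 0 \<longrightarrow> g F = 0" "F \<in> B"
  shows "g F = 0"
proof -
  define w where "w = (\<lambda>a i j. F a i j - F0 a i j)"
  obtain Q0 where Q0: "\<forall>t. g0 (line F0 w t) = poly Q0 t" using pf_line[OF assms(2)] by blast
  obtain Q where Q: "\<forall>t. g (line F0 w t) = poly Q t" using pf_line[OF assms(3)] by blast
  have "Q0 \<noteq> 0" using Q0 assms(5) line_start[of F0 w] by (metis poly_0)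
  have inB: "line F0 w t \<in> B" for t using assms(1,4,7) unfolding lclosed_def w_def by blast
  have "poly (Q * Q0) t = 0" for t using Q Q0 assms(6) inB[of t] by auto
  then have "Q * Q0 = 0" by (intro poly_unique) simp
  then have "Q = 0" using \<open>Q0 \<noteq> 0\<close> by simp
  then have "g (line F0 w 1) = 0" using Q by simp
  moreover have "line F0 w 1 = F" unfolding w_def by (rule line_end)
  ultimately show ?thesis by simp
qed

lemma common_point2:
  fixes f g :: "'k::field_char_0 fam \<Rightarrow> 'k"
  assumes "lclosed B" "pf f" "pf g" "E1 \<in> B" "f E1 \<noteq> 0" "E2 \<in> B" "g E2 \<noteq> 0"
  shows "\<exists>E\<in>B. f E \<noteq> 0 \<and> g E \<noteq> 0"
  using vanish_open[OF assms(1,2,3,4,5) _ assms(6)] assms(7) by blast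

lemma common_point:
  fixes fs :: "'i \<Rightarrow> 'k::field_char_0 fam \<Rightarrow> 'k"
  assumes "lclosed B" "finite I" "B \<noteq> {}" "\<And>i. i \<in> I \<Longrightarrow> pf (fs i)"
    "\<And>i. i \<in> I \<Longrightarrow> \<exists>E\<in>B. fs i E \<noteq> 0"
  shows "\<exists>E\<in>B. \<forall>i\<in>I. fs i E \<noteq> 0"
  using assms(2,4,5)
proof (induction I rule: finite_induct)
  case empty then show ?case using assms(3) by auto
next
  case (insert x I)
  then obtain E1 where E1: "E1 \<in> B" "\<forall>i\<in>I. fs i E1 \<noteq> 0" by blast
  obtain E2 where E2: "E2 \<in> B" "fs x E2 \<noteq> 0" using insert by blast
  have p1: "pf (\<lambda>E. \<Prod>i\<in>I. fs i E)" using insert by (intro pf_prod) auto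
  have "(\<Prod>i\<in>I. fs i E1) \<noteq> 0" using E1 insert by simp
  then obtain E where "E \<in> B" "(\<Prod>i\<in>I. fs i E) \<noteq> 0" "fs x E \<noteq> 0"
    using common_point2[OF assms(1) p1 _ E1(1) _ E2(1)] E2 insert by blast
  then show ?case using insert by auto
qed


lemma sum_fun_apply3: "(\<Sum>x\<in>A. (f x :: 'k::field_char_0 fam)) a i j = (\<Sum>x\<in>A. f x a i j)"
  by (induction A rule: infinite_finite_induct) auto

lemma vs_fscale: "vector_space (fscale :: 'k::field \<Rightarrow> 'k fam \<Rightarrow> 'k fam)"
  by unfold_locales (auto simp: fscale_def algebra_simps fun_eq_iff)

interpretation fs: vector_space "fscale :: 'k::field \<Rightarrow> 'k fam \<Rightarrow> 'k fam"
  by (rule vs_fscale)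

definition hsupp :: "(nat \<times> nat) list \<Rightarrow> (nat \<Rightarrow> nat) \<Rightarrow> (nat \<Rightarrow> nat) \<Rightarrow> 'k::field_char_0 fam \<Rightarrow> bool" where
  "hsupp arr a b \<psi> \<longleftrightarrow> (\<forall>al i j. \<not> (al < length arr \<and> i < b (snd (arr!al)) \<and> j < a (fst (arr!al))) \<longrightarrow> \<psi> al i j = 0)"

lemma is_rep_hsupp: "is_rep arr d M \<longleftrightarrow> hsupp arr d d M"
  by (simp add: is_rep_def hsupp_def)

definition esurj :: "nat \<Rightarrow> (nat \<times> nat) list \<Rightarrow> (nat \<Rightarrow> nat) \<Rightarrow> (nat \<Rightarrow> nat) \<Rightarrow> 'k::field_char_0 fam \<Rightarrow> 'k fam \<Rightarrow> bool" where
  "esurj n arr a b M N \<longleftrightarrow> (\<forall>\<psi>. hsupp arr a b \<psi> \<longrightarrow> (\<exists>\<phi>\<in>vmaps n a b. delta arr a b M N \<phi> = \<psi>))"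

definition Pset :: "(nat \<times> nat) list \<Rightarrow> (nat \<Rightarrow> nat) \<Rightarrow> (nat \<Rightarrow> nat) \<Rightarrow> (nat \<times> nat \<times> nat) set" where
  "Pset arr a b = {(al, i, j). al < length arr \<and> i < b (snd (arr!al)) \<and> j < a (fst (arr!al))}"

definition ev :: "nat \<times> nat \<times> nat \<Rightarrow> 'k::field_char_0 fam" where
  "ev x = (\<lambda>al i j. if (al, i, j) = x then 1 else 0)"

lemma Pset_Sigma: "Pset arr a b = (SIGMA al:{..<length arr}. {..<b (snd (arr!al))} \<times> {..<a (fst (arr!al))})"
  by (auto simp: Pset_def)

lemma finite_Pset: "finite (Pset arr a b)"
  by (simp add: Pset_Sigma)

lemma card_Pset: "card (Pset arr a b) = (\<Sum>al<length arr. a (fst (arr!al)) * b (snd (arr!al)))"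
  by (simp add: Pset_Sigma card_SigmaI card_cartesian_product mult.commute)

lemma ev_inj: "inj (ev :: _ \<Rightarrow> 'k::field_char_0 fam)"
proof (rule injI)
  fix x y :: "nat \<times> nat \<times> nat"
  assume "(ev x :: 'k fam) = ev y"
  then have "(ev x :: 'k fam) (fst x) (fst (snd x)) (snd (snd x)) = ev y (fst x) (fst (snd x)) (snd (snd x))" by simp
  then show "x = y" by (auto simp: ev_def split: if_splits)
qed

lemma ev_hsupp: "x \<in> Pset arr a b \<Longrightarrow> hsupp arr a b (ev x)"
  by (auto simp: hsupp_def Pset_def ev_def)

lemma sum_ev: "finite A \<Longrightarrow> (\<Sum>x\<in>A. fscale (u x) (ev x) :: 'k::field_char_0 fam) al i j = (if (al,i,j) \<in> A then u (al,i,j) else 0)"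
proof -
  assume A: "finite A"
  have "(\<Sum>x\<in>A. fscale (u x) (ev x) :: 'k fam) al i j = (\<Sum>x\<in>A. if x = (al,i,j) then u x else 0)"
    by (auto simp: sum_fun_apply3 fscale_def ev_def intro!: sum.cong)
  also have "\<dots> = (if (al,i,j) \<in> A then u (al,i,j) else 0)"
    using A by (simp add: sum.delta)
  finally show ?thesis .
qed

lemma ev_independent: "fs.independent (ev ` Pset arr a b :: 'k::field_char_0 fam set)"
proof
  assume dep: "fs.dependent (ev ` Pset arr a b :: 'k fam set)"
  have fin: "finite (ev ` Pset arr a b :: 'k fam set)" by (simp add: finite_Pset)
  obtain u where u: "\<exists>v\<in>ev ` Pset arr a b. u v \<noteq> 0" "(\<Sum>v\<in>ev ` Pset arr a b. fscale (u v) v) = (0 :: 'k fam)"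
    using dep fs.dependent_finite[OF fin] by blast
  then obtain x where x: "x \<in> Pset arr a b" "u (ev x) \<noteq> 0" by blast
  have "(\<Sum>v\<in>ev ` Pset arr a b. fscale (u v) v) = (\<Sum>y\<in>Pset arr a b. fscale ((u \<circ> ev) y) (ev y) :: 'k fam)"
    by (subst sum.reindex) (auto intro: inj_on_subset[OF ev_inj])
  then have "(\<Sum>y\<in>Pset arr a b. fscale ((u \<circ> ev) y) (ev y) :: 'k fam) (fst x) (fst (snd x)) (snd (snd x)) = 0"
    using u(2) by simp
  then show False using x by (simp add: sum_ev finite_Pset)
qed

lemma hsupp_span: "hsupp arr a b \<psi> \<Longrightarrow> \<psi> \<in> fs.span (ev ` Pset arr a b :: 'k::field_char_0 fam set)"
proof -
  assume h: "hsupp arr a b \<psi>"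
  have eq: "\<psi> = (\<Sum>x\<in>Pset arr a b. fscale (\<psi> (fst x) (fst (snd x)) (snd (snd x))) (ev x))"
  proof (intro ext)
    fix al i j
    show "\<psi> al i j = (\<Sum>x\<in>Pset arr a b. fscale (\<psi> (fst x) (fst (snd x)) (snd (snd x))) (ev x)) al i j"
      using h by (subst sum_ev[OF finite_Pset]) (auto simp: Pset_def hsupp_def)
  qed
  show ?thesis
    by (subst eq, intro fs.span_sum fs.span_scale fs.span_base) auto
qed

lemma delta_hsupp: "hsupp arr a b (delta arr a b M N \<phi>)"
  by (simp add: hsupp_def delta_def)

lemma delta_add: "delta arr a b M N (\<lambda>v i j. \<phi> v i j + \<phi>' v i j) = (\<lambda>al i j. delta arr a b M N \<phi> al i j + delta arr a b M N \<phi>' al i j)"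
  by (auto simp: delta_def fun_eq_iff sum.distrib algebra_simps)

lemma delta_scale: "delta arr a b M N (\<lambda>v i j. c * \<phi> v i j) = (\<lambda>al i j. c * delta arr a b M N \<phi> al i j)"
  by (auto simp: delta_def fun_eq_iff sum_distrib_left algebra_simps)

lemma delta_zero: "delta arr a b M N (\<lambda>v i j. 0) = (\<lambda>al i j. 0)"
  by (auto simp: delta_def fun_eq_iff)

lemma delta_sum: "delta arr a b M N (\<lambda>v i j. \<Sum>q\<in>Q. c q * \<phi>s q v i j) = (\<lambda>al i j. \<Sum>q\<in>Q. c q * delta arr a b M N (\<phi>s q) al i j)"
proof (induction Q rule: infinite_finite_induct)
  case (infinite A) then show ?case by (simp add: delta_zero)
next
  case empty then show ?case by (simp add: delta_zero)
next
  case (insert x F)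
  have "delta arr a b M N (\<lambda>v i j. \<Sum>q\<in>insert x F. c q * \<phi>s q v i j)
      = delta arr a b M N (\<lambda>v i j. c x * \<phi>s x v i j + (\<Sum>q\<in>F. c q * \<phi>s q v i j))"
    using insert by simp
  also have "\<dots> = (\<lambda>al i j. c x * delta arr a b M N (\<phi>s x) al i j + (\<Sum>q\<in>F. c q * delta arr a b M N (\<phi>s q) al i j))"
    by (simp only: delta_add delta_scale insert.IH)
  finally show ?case using insert by simp
qed

lemma img_subspace: "fs.subspace (delta arr a b M N ` vmaps n a b :: 'k::field_char_0 fam set)"
  unfolding fs.subspace_def
proof (intro conjI ballI allI)
  show "(0 :: 'k fam) \<in> delta arr a b M N ` vmaps n a b"
    by (rule image_eqI[of _ _ "\<lambda>v i j. 0"]) (auto simp: delta_zero vmaps_def fun_eq_iff)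
next
  fix x y :: "'k fam" assume "x \<in> delta arr a b M N ` vmaps n a b" "y \<in> delta arr a b M N ` vmaps n a b"
  then obtain \<phi> \<phi>' where "\<phi> \<in> vmaps n a b" "\<phi>' \<in> vmaps n a b" "x = delta arr a b M N \<phi>" "y = delta arr a b M N \<phi>'"
    by blast
  then show "x + y \<in> delta arr a b M N ` vmaps n a b"
    by (intro image_eqI[of _ _ "\<lambda>v i j. \<phi> v i j + \<phi>' v i j"]) (auto simp: delta_add vmaps_def fun_eq_iff)
next
  fix c :: 'k and x :: "'k fam" assume "x \<in> delta arr a b M N ` vmaps n a b"
  then obtain \<phi> where "\<phi> \<in> vmaps n a b" "x = delta arr a b M N \<phi>" by blast
  then show "fscale c x \<in> delta arr a b M N ` vmaps n a b"
    by (intro image_eqI[of _ _ "\<lambda>v i j. c * \<phi> v i j"]) (auto simp: delta_scale vmaps_def fscale_def fun_eq_iff)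
qed

lemma ext_dim_0_iff: "ext_dim n arr a b M N = 0 \<longleftrightarrow> esurj n arr a b (M :: 'k::field_char_0 fam) N"
proof -
  let ?img = "delta arr a b M N ` vmaps n a b :: 'k fam set"
  let ?EP = "ev ` Pset arr a b :: 'k fam set"
  let ?m = "\<Sum>al<length arr. a (fst (arr!al)) * b (snd (arr!al))"
  have cEP: "card ?EP = ?m" using card_Pset card_image[OF inj_on_subset[OF ev_inj]] by (metis subset_UNIV)
  have ext: "ext_dim n arr a b M N = ?m - fs.dim ?img" by (simp add: ext_dim_def kdim_def)
  show ?thesis
  proof
    assume "ext_dim n arr a b M N = 0"
    then have le: "?m \<le> fs.dim ?img" using ext by simp
    show "esurj n arr a b M N" unfolding esurj_def
    proof (intro allI impI)
      fix \<psi> :: "'k fam" assume h: "hsupp arr a b \<psi>"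
      show "\<exists>\<phi>\<in>vmaps n a b. delta arr a b M N \<phi> = \<psi>"
      proof (rule ccontr)
        assume "\<not> ?thesis"
        then have nimg: "\<psi> \<notin> ?img" by blast
        obtain B0 where B0: "B0 \<subseteq> ?img" "fs.independent B0" "?img \<subseteq> fs.span B0" "card B0 = fs.dim ?img"
          using fs.basis_exists by blast
        have spB: "fs.span B0 \<subseteq> ?img" using fs.span_minimal[OF B0(1) img_subspace] .
        have "\<psi> \<notin> fs.span B0" using spB nimg by blast
        then have ind: "fs.independent (insert \<psi> B0)" using fs.independent_insertI B0(2) by blast
        have "?img \<subseteq> fs.span ?EP" using hsupp_span delta_hsupp by blast
        then have sub: "insert \<psi> B0 \<subseteq> fs.span ?EP" using B0(1) hsupp_span[OF h] by blast
        have finEP: "finite ?EP" by (simp add: finite_Pset)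
        from fs.independent_span_bound[OF finEP ind sub]
        have "finite (insert \<psi> B0)" "card (insert \<psi> B0) \<le> card ?EP" by auto
        moreover have "\<psi> \<notin> B0" using B0(1) nimg by blast
        ultimately show False using cEP le B0(4) by simp
      qed
    qed
  next
    assume s: "esurj n arr a b M N"
    have "?EP \<subseteq> ?img"
    proof
      fix y assume "y \<in> ?EP"
      then obtain x where x: "x \<in> Pset arr a b" "y = ev x" by blast
      then have "\<exists>\<phi>\<in>vmaps n a b. delta arr a b M N \<phi> = ev x"
        using s ev_hsupp[OF x(1)] unfolding esurj_def by blast
      then obtain \<phi> where "\<phi> \<in> vmaps n a b" "delta arr a b M N \<phi> = ev x" by blast
      then show "y \<in> ?img" using x(2) by (auto intro!: image_eqI[of _ _ \<phi>])
    qed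
    obtain B0 where B0: "B0 \<subseteq> ?img" "fs.independent B0" "?img \<subseteq> fs.span B0" "card B0 = fs.dim ?img"
      using fs.basis_exists by blast
    have "?img \<subseteq> fs.span ?EP" using hsupp_span delta_hsupp by blast
    then have "finite B0" using fs.independent_span_bound[OF _ B0(2)] B0(1) finite_Pset
      by (metis finite_imageI subset_trans)
    moreover have "?EP \<subseteq> fs.span B0" using \<open>?EP \<subseteq> ?img\<close> B0(3) by blast
    ultimately have "card ?EP \<le> fs.dim ?img" using fs.independent_span_bound[OF _ ev_independent] B0(4) by metis
    then show "ext_dim n arr a b M N = 0" using ext cEP by simp
  qed
qed

lemma ext_gen_0_iff: "ext_gen (TYPE('k::field_char_0)) n arr a b = 0 \<longleftrightarrow>
  (\<exists>M N :: 'k fam. is_rep arr a M \<and> is_rep arr b N \<and> esurj n arr a b M N)"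
proof
  assume "ext_gen TYPE('k) n arr a b = 0"
  then have "(LEAST e. \<exists>(M :: 'k fam) N. is_rep arr a M \<and> is_rep arr b N \<and> e = ext_dim n arr a b M N) = 0"
    by (simp add: ext_gen_def)
  moreover have "\<exists>e. \<exists>(M :: 'k fam) N. is_rep arr a M \<and> is_rep arr b N \<and> e = ext_dim n arr a b M N"
    by (rule exI[of _ "ext_dim n arr a b (\<lambda>_ _ _. 0::'k) (\<lambda>_ _ _. 0)"]) (auto simp: is_rep_def)
  ultimately have "\<exists>(M :: 'k fam) N. is_rep arr a M \<and> is_rep arr b N \<and> 0 = ext_dim n arr a b M N"
    using LeastI_ex[of "\<lambda>e. \<exists>(M :: 'k fam) N. is_rep arr a M \<and> is_rep arr b N \<and> e = ext_dim n arr a b M N"]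
    by simp
  then show "\<exists>M N :: 'k fam. is_rep arr a M \<and> is_rep arr b N \<and> esurj n arr a b M N"
    using ext_dim_0_iff by metis
next
  assume "\<exists>M N :: 'k fam. is_rep arr a M \<and> is_rep arr b N \<and> esurj n arr a b M N"
  then obtain M N :: "'k fam" where "is_rep arr a M" "is_rep arr b N" "ext_dim n arr a b M N = 0"
    using ext_dim_0_iff by metis
  then have "(LEAST e. \<exists>(M :: 'k fam) N. is_rep arr a M \<and> is_rep arr b N \<and> e = ext_dim n arr a b M N) = 0"
    by (intro Least_eq_0) metis
  then show "ext_gen TYPE('k) n arr a b = 0" by (simp add: ext_gen_def)
qed


lemma pf_cmult: "pf f \<Longrightarrow> pf (\<lambda>F. c * f F)"
  using pf_mult[OF pf_const, of f c] by simp

lemma pf_delta: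
  assumes pM: "\<And>al i j. pf (\<lambda>F. MF F al i j)" and pN: "\<And>al i j. pf (\<lambda>F. NF F al i j)"
  shows "pf (\<lambda>F. delta arr a b (MF F) (NF F) \<phi> al i j)"
proof (cases "al < length arr \<and> i < b (snd (arr!al)) \<and> j < a (fst (arr!al))")
  case True
  have 1: "pf (\<lambda>F. \<Sum>l<a (snd (arr!al)). \<phi> (snd (arr!al)) i l * MF F al l j)"
    by (rule pf_sum) (rule pf_cmult[OF pM])
  have 2: "pf (\<lambda>F. \<Sum>l<b (fst (arr!al)). NF F al i l * \<phi> (fst (arr!al)) l j)"
  proof (rule pf_sum)
    fix l show "pf (\<lambda>F. NF F al i l * \<phi> (fst (arr!al)) l j)"
      using pf_cmult[OF pN, of "\<phi> (fst (arr!al)) l j" al i l] by (simp add: mult.commute)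
  qed
  show ?thesis using pf_minus[OF 1 2] True by (simp add: delta_def)
next
  case False
  then have "(\<lambda>F. delta arr a b (MF F) (NF F) \<phi> al i j) = (\<lambda>F. 0)" by (auto simp: delta_def fun_eq_iff)
  then show ?thesis by (simp add: pf_const)
qed

lemma open_esurj:
  fixes MF NF :: "'k::field_char_0 fam \<Rightarrow> 'k fam"
  assumes pM: "\<And>al i j. pf (\<lambda>F. MF F al i j)" and pN: "\<And>al i j. pf (\<lambda>F. NF F al i j)"
    and s0: "esurj n arr a b (MF F0) (NF F0)"
  shows "\<exists>g. pf g \<and> g F0 \<noteq> 0 \<and> (\<forall>F. g F \<noteq> 0 \<longrightarrow> esurj n arr a b (MF F) (NF F))"
proof -
  define P where "P = Pset arr a b"
  define m where "m = card P"
  obtain pos where pos: "bij_betw pos {0..<m} P"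
    using ex_bij_betw_nat_finite[OF finite_Pset] unfolding P_def m_def by blast
  have posP: "p < m \<Longrightarrow> pos p \<in> P" for p using pos by (auto simp: bij_betw_def)
  have "\<forall>p. \<exists>\<phi>. p < m \<longrightarrow> \<phi> \<in> vmaps n a b \<and> delta arr a b (MF F0) (NF F0) \<phi> = ev (pos p)"
    using s0 ev_hsupp posP unfolding esurj_def P_def by blast
  then obtain \<phi>s where phis: "\<And>p. p < m \<Longrightarrow> \<phi>s p \<in> vmaps n a b \<and> delta arr a b (MF F0) (NF F0) (\<phi>s p) = ev (pos p)"
    by metis
  define ent where "ent F p q = delta arr a b (MF F) (NF F) (\<phi>s q) (fst (pos p)) (fst (snd (pos p))) (snd (snd (pos p)))" for F p q
  define C where "C F = mat m m (\<lambda>(p,q). ent F p q)" for F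
  define g where "g F = det (C F)" for F
  have Ccar: "C F \<in> carrier_mat m m" for F by (simp add: C_def)
  have "C F0 = 1\<^sub>m m"
  proof (rule eq_matI)
    fix p q assume pq: "p < dim_row (1\<^sub>m m)" "q < dim_col (1\<^sub>m m)"
    then have "p < m" "q < m" by auto
    moreover have "pos p = pos q \<longleftrightarrow> p = q" using pos \<open>p < m\<close> \<open>q < m\<close>
      by (auto simp: bij_betw_def inj_on_def)
    ultimately show "C F0 $$ (p, q) = 1\<^sub>m m $$ (p, q)"
      using phis[of q] by (auto simp: C_def ent_def ev_def)
  qed (simp_all add: C_def)
  then have g0: "g F0 \<noteq> 0" by (simp add: g_def)
  have geq: "g F = (\<Sum>\<pi>\<in>{\<pi>. \<pi> permutes {0..<m}}. signof \<pi> * (\<Prod>i\<in>{0..<m}. ent F i (\<pi> i)))" for F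
    unfolding g_def det_def'[OF Ccar]
  proof (rule sum.cong[OF refl], rule arg_cong[where f="\<lambda>x. _ * x"], rule prod.cong[OF refl])
    fix \<pi> i assume "\<pi> \<in> {\<pi>. \<pi> permutes {0..<m}}" "i \<in> {0..<m}"
    then have "\<pi> i < m" using permutes_in_image by fastforce
    then show "C F $$ (i, \<pi> i) = ent F i (\<pi> i)" using \<open>i \<in> {0..<m}\<close> by (simp add: C_def)
  qed
  have pg: "pf g"
  proof -
    have "pf (\<lambda>F. \<Sum>\<pi>\<in>{\<pi>. \<pi> permutes {0..<m}}. signof \<pi> * (\<Prod>i\<in>{0..<m}. ent F i (\<pi> i)))"
      by (intro pf_sum pf_cmult pf_prod) (unfold ent_def, rule pf_delta[OF pM pN])
    moreover have "g = (\<lambda>F. \<Sum>\<pi>\<in>{\<pi>. \<pi> permutes {0..<m}}. signof \<pi> * (\<Prod>i\<in>{0..<m}. ent F i (\<pi> i)))"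
      by (rule ext, rule geq)
    ultimately show ?thesis by simp
  qed
  have surjF: "esurj n arr a b (MF F) (NF F)" if gF: "g F \<noteq> 0" for F
    unfolding esurj_def
  proof (intro allI impI)
    fix \<psi> :: "'k fam" assume h: "hsupp arr a b \<psi>"
    have "C F \<in> Units (ring_mat TYPE('k) m ())"
      using det_non_zero_imp_unit[OF Ccar] gF by (simp add: g_def)
    then obtain B where B: "B \<in> carrier_mat m m" "C F * B = 1\<^sub>m m"
      unfolding Units_def by (auto simp: ring_mat_simps)
    define y where "y = vec m (\<lambda>p. \<psi> (fst (pos p)) (fst (snd (pos p))) (snd (snd (pos p))))"
    define x where "x = B *\<^sub>v y"
    have ycar: "y \<in> carrier_vec m" by (simp add: y_def)
    have Cx: "C F *\<^sub>v x = y"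
    proof -
      have "C F *\<^sub>v (B *\<^sub>v y) = (C F * B) *\<^sub>v y"
        using assoc_mult_mat_vec[OF Ccar[of F] B(1) ycar] by simp
      then show ?thesis using B(2) ycar by (simp add: x_def)
    qed
    have xcar: "x \<in> carrier_vec m" using B ycar by (simp add: x_def)
    define \<phi> where "\<phi> = (\<lambda>v i j. \<Sum>q\<in>{0..<m}. x $ q * \<phi>s q v i j)"
    have phiv: "\<phi> \<in> vmaps n a b"
      using phis unfolding vmaps_def \<phi>_def by auto
    have dphi: "delta arr a b (MF F) (NF F) \<phi> = (\<lambda>al i j. \<Sum>q\<in>{0..<m}. x $ q * delta arr a b (MF F) (NF F) (\<phi>s q) al i j)"
      unfolding \<phi>_def by (rule delta_sum)
    have "delta arr a b (MF F) (NF F) \<phi> = \<psi>"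
    proof (intro ext)
      fix al i j
      show "delta arr a b (MF F) (NF F) \<phi> al i j = \<psi> al i j"
      proof (cases "(al, i, j) \<in> P")
        case True
        then obtain p where p: "p < m" "pos p = (al, i, j)" using pos
          by (auto simp: bij_betw_def image_iff)
        have "(C F *\<^sub>v x) $ p = (\<Sum>q\<in>{0..<m}. ent F p q * x $ q)"
          using p(1) xcar by (simp add: C_def scalar_prod_def row_def)
        also have "\<dots> = delta arr a b (MF F) (NF F) \<phi> al i j"
          using p by (simp add: dphi ent_def mult.commute)
        finally show ?thesis using Cx p by (simp add: y_def)
      next
        case False
        then have "delta arr a b (MF F) (NF F) (\<phi>s q) al i j = 0" for q
          using delta_hsupp[of arr a b "MF F" "NF F" "\<phi>s q"] unfolding hsupp_def P_def Pset_def by auto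
        moreover have "\<psi> al i j = 0" using h False unfolding hsupp_def P_def Pset_def by auto
        ultimately show ?thesis by (simp add: dphi)
      qed
    qed
    then show "\<exists>\<phi>\<in>vmaps n a b. delta arr a b (MF F) (NF F) \<phi> = \<psi>" using phiv by blast
  qed
  show ?thesis using pg g0 surjF by blast
qed


lemma sum_lt_add: "(\<Sum>l<a+b. f l) = (\<Sum>l<a. f l) + (\<Sum>l<(b::nat). f (l + a))"
  by (induction b) (simp_all add: add.commute add.left_commute)

lemma delta_in: "al < length arr \<Longrightarrow> i < b (snd (arr!al)) \<Longrightarrow> j < a (fst (arr!al)) \<Longrightarrow>
  delta arr a b M N \<phi> al i j = (\<Sum>l<a (snd (arr!al)). \<phi> (snd (arr!al)) i l * M al l j)
       - (\<Sum>l<b (fst (arr!al)). N al i l * \<phi> (fst (arr!al)) l j)"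
  by (simp add: delta_def)

lemma delta_out: "\<not> (al < length arr \<and> i < b (snd (arr!al)) \<and> j < a (fst (arr!al))) \<Longrightarrow>
  delta arr a b M N \<phi> al i j = 0"
  by (auto simp: delta_def)

definition dsum :: "(nat \<times> nat) list \<Rightarrow> (nat \<Rightarrow> nat) \<Rightarrow> 'k::field_char_0 fam \<Rightarrow> 'k fam \<Rightarrow> 'k fam" where
  "dsum arr a M N = (\<lambda>al i j. if i < a (snd (arr!al)) then (if j < a (fst (arr!al)) then M al i j else 0)
      else (if j < a (fst (arr!al)) then 0 else N al (i - a (snd (arr!al))) (j - a (fst (arr!al)))))"

lemma dsum_rep: "is_rep arr a M \<Longrightarrow> is_rep arr b N \<Longrightarrow> is_rep arr (\<lambda>v. a v + b v) (dsum arr a M N)"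
  unfolding is_rep_def dsum_def by (auto simp: not_less)

lemma esurj_dsum_tgt:
  fixes M N1 N2 :: "'k::field_char_0 fam"
  assumes s1: "esurj n arr c a M N1" and s2: "esurj n arr c b M N2"
    and r1: "is_rep arr a N1" and r2: "is_rep arr b N2"
  shows "esurj n arr c (\<lambda>v. a v + b v) M (dsum arr a N1 N2)"
  unfolding esurj_def
proof (intro allI impI)
  fix \<psi> :: "'k fam" assume h: "hsupp arr c (\<lambda>v. a v + b v) \<psi>"
  define \<psi>1 where "\<psi>1 = (\<lambda>al i j. if i < a (snd (arr!al)) then \<psi> al i j else 0)"
  define \<psi>2 where "\<psi>2 = (\<lambda>al i j. if i < b (snd (arr!al)) then \<psi> al (i + a (snd (arr!al))) j else 0)"
  have "hsupp arr c a \<psi>1" using h by (auto simp: hsupp_def \<psi>1_def)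
  then obtain \<phi>1 where p1: "\<phi>1 \<in> vmaps n c a" "delta arr c a M N1 \<phi>1 = \<psi>1" using s1 by (auto simp: esurj_def)
  have "hsupp arr c b \<psi>2" using h by (auto simp: hsupp_def \<psi>2_def)
  then obtain \<phi>2 where p2: "\<phi>2 \<in> vmaps n c b" "delta arr c b M N2 \<phi>2 = \<psi>2" using s2 by (auto simp: esurj_def)
  define \<phi> where "\<phi> = (\<lambda>v i j. if i < a v then \<phi>1 v i j else \<phi>2 v (i - a v) j)"
  have pv: "\<phi> \<in> vmaps n c (\<lambda>v. a v + b v)"
    using p1(1) p2(1) unfolding vmaps_def \<phi>_def by (auto simp: not_less)
  have "delta arr c (\<lambda>v. a v + b v) M (dsum arr a N1 N2) \<phi> = \<psi>"
  proof (intro ext)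
    fix al i j
    let ?t = "snd (arr!al)" and ?s = "fst (arr!al)"
    show "delta arr c (\<lambda>v. a v + b v) M (dsum arr a N1 N2) \<phi> al i j = \<psi> al i j"
    proof (cases "al < length arr \<and> i < a ?t + b ?t \<and> j < c ?s")
      case False
      then show ?thesis using h by (auto simp: hsupp_def delta_def)
    next
      case True
      then have al: "al < length arr" and ib: "i < a ?t + b ?t" and jc: "j < c ?s" by auto
      have split: "(\<Sum>l<a ?s + b ?s. dsum arr a N1 N2 al i l * \<phi> ?s l j)
          = (\<Sum>l<a ?s. dsum arr a N1 N2 al i l * \<phi> ?s l j) + (\<Sum>l<b ?s. dsum arr a N1 N2 al i (l + a ?s) * \<phi> ?s (l + a ?s) j)"
        by (rule sum_lt_add)
      show ?thesis
      proof (cases "i < a ?t")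
        case True
        have A: "(\<Sum>l<a ?s. dsum arr a N1 N2 al i l * \<phi> ?s l j) = (\<Sum>l<a ?s. N1 al i l * \<phi>1 ?s l j)"
          using True by (intro sum.cong) (auto simp: dsum_def \<phi>_def)
        have B: "(\<Sum>l<b ?s. dsum arr a N1 N2 al i (l + a ?s) * \<phi> ?s (l + a ?s) j) = 0"
          using True by (intro sum.neutral) (auto simp: dsum_def)
        have C: "(\<Sum>l<c ?t. \<phi> ?t i l * M al l j) = (\<Sum>l<c ?t. \<phi>1 ?t i l * M al l j)"
          using True by (simp add: \<phi>_def)
        have "delta arr c a M N1 \<phi>1 al i j = \<psi>1 al i j" using p1(2) by simp
        then have "(\<Sum>l<c ?t. \<phi>1 ?t i l * M al l j) - (\<Sum>l<a ?s. N1 al i l * \<phi>1 ?s l j) = \<psi> al i j"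
          using True al jc by (simp add: delta_in \<psi>1_def)
        then show ?thesis using al ib jc by (simp add: delta_in split A B C)
      next
        case False
        define i' where "i' = i - a ?t"
        have i': "i = i' + a ?t" "i' < b ?t" using False ib by (auto simp: i'_def)
        have A: "(\<Sum>l<a ?s. dsum arr a N1 N2 al i l * \<phi> ?s l j) = 0"
          using False by (intro sum.neutral) (auto simp: dsum_def)
        have B: "(\<Sum>l<b ?s. dsum arr a N1 N2 al i (l + a ?s) * \<phi> ?s (l + a ?s) j) = (\<Sum>l<b ?s. N2 al i' l * \<phi>2 ?s l j)"
          using False by (intro sum.cong) (auto simp: dsum_def \<phi>_def i'_def)
        have C: "(\<Sum>l<c ?t. \<phi> ?t i l * M al l j) = (\<Sum>l<c ?t. \<phi>2 ?t i' l * M al l j)"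
          using False by (simp add: \<phi>_def i'_def)
        have "delta arr c b M N2 \<phi>2 al i' j = \<psi>2 al i' j" using p2(2) by simp
        then have "(\<Sum>l<c ?t. \<phi>2 ?t i' l * M al l j) - (\<Sum>l<b ?s. N2 al i' l * \<phi>2 ?s l j) = \<psi> al i j"
          using i' al jc by (simp add: delta_in \<psi>2_def)
        then show ?thesis using al ib jc by (simp add: delta_in split A B C)
      qed
    qed
  qed
  then show "\<exists>\<phi>\<in>vmaps n c (\<lambda>v. a v + b v). delta arr c (\<lambda>v. a v + b v) M (dsum arr a N1 N2) \<phi> = \<psi>"
    using pv by blast
qed

lemma esurj_dsum_src:
  fixes M1 M2 N :: "'k::field_char_0 fam"
  assumes s1: "esurj n arr a c M1 N" and s2: "esurj n arr b c M2 N"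
    and r1: "is_rep arr a M1" and r2: "is_rep arr b M2"
  shows "esurj n arr (\<lambda>v. a v + b v) c (dsum arr a M1 M2) N"
  unfolding esurj_def
proof (intro allI impI)
  fix \<psi> :: "'k fam" assume h: "hsupp arr (\<lambda>v. a v + b v) c \<psi>"
  define \<psi>1 where "\<psi>1 = (\<lambda>al i j. if j < a (fst (arr!al)) then \<psi> al i j else 0)"
  define \<psi>2 where "\<psi>2 = (\<lambda>al i j. if j < b (fst (arr!al)) then \<psi> al i (j + a (fst (arr!al))) else 0)"
  have "hsupp arr a c \<psi>1" using h by (auto simp: hsupp_def \<psi>1_def)
  then obtain \<phi>1 where p1: "\<phi>1 \<in> vmaps n a c" "delta arr a c M1 N \<phi>1 = \<psi>1" using s1 by (auto simp: esurj_def)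
  have "hsupp arr b c \<psi>2" using h by (auto simp: hsupp_def \<psi>2_def)
  then obtain \<phi>2 where p2: "\<phi>2 \<in> vmaps n b c" "delta arr b c M2 N \<phi>2 = \<psi>2" using s2 by (auto simp: esurj_def)
  define \<phi> where "\<phi> = (\<lambda>v i j. if j < a v then \<phi>1 v i j else \<phi>2 v i (j - a v))"
  have pv: "\<phi> \<in> vmaps n (\<lambda>v. a v + b v) c"
    using p1(1) p2(1) unfolding vmaps_def \<phi>_def by (auto simp: not_less)
  have "delta arr (\<lambda>v. a v + b v) c (dsum arr a M1 M2) N \<phi> = \<psi>"
  proof (intro ext)
    fix al i j
    let ?t = "snd (arr!al)" and ?s = "fst (arr!al)"
    show "delta arr (\<lambda>v. a v + b v) c (dsum arr a M1 M2) N \<phi> al i j = \<psi> al i j"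
    proof (cases "al < length arr \<and> i < c ?t \<and> j < a ?s + b ?s")
      case False
      then show ?thesis using h by (auto simp: hsupp_def delta_def)
    next
      case True
      then have al: "al < length arr" and ic: "i < c ?t" and jb: "j < a ?s + b ?s" by auto
      have split: "(\<Sum>l<a ?t + b ?t. \<phi> ?t i l * dsum arr a M1 M2 al l j)
          = (\<Sum>l<a ?t. \<phi> ?t i l * dsum arr a M1 M2 al l j) + (\<Sum>l<b ?t. \<phi> ?t i (l + a ?t) * dsum arr a M1 M2 al (l + a ?t) j)"
        by (rule sum_lt_add)
      show ?thesis
      proof (cases "j < a ?s")
        case True
        have A: "(\<Sum>l<a ?t. \<phi> ?t i l * dsum arr a M1 M2 al l j) = (\<Sum>l<a ?t. \<phi>1 ?t i l * M1 al l j)"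
          using True by (intro sum.cong) (auto simp: dsum_def \<phi>_def)
        have B: "(\<Sum>l<b ?t. \<phi> ?t i (l + a ?t) * dsum arr a M1 M2 al (l + a ?t) j) = 0"
          using True by (intro sum.neutral) (auto simp: dsum_def)
        have C: "(\<Sum>l<c ?s. N al i l * \<phi> ?s l j) = (\<Sum>l<c ?s. N al i l * \<phi>1 ?s l j)"
          using True by (simp add: \<phi>_def)
        have "delta arr a c M1 N \<phi>1 al i j = \<psi>1 al i j" using p1(2) by simp
        then have "(\<Sum>l<a ?t. \<phi>1 ?t i l * M1 al l j) - (\<Sum>l<c ?s. N al i l * \<phi>1 ?s l j) = \<psi> al i j"
          using True al ic by (simp add: delta_in \<psi>1_def)
        then show ?thesis using al ic jb by (simp add: delta_in split A B C)
      next
        case False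
        define j' where "j' = j - a ?s"
        have j': "j = j' + a ?s" "j' < b ?s" using False jb by (auto simp: j'_def)
        have A: "(\<Sum>l<a ?t. \<phi> ?t i l * dsum arr a M1 M2 al l j) = 0"
          using False by (intro sum.neutral) (auto simp: dsum_def)
        have B: "(\<Sum>l<b ?t. \<phi> ?t i (l + a ?t) * dsum arr a M1 M2 al (l + a ?t) j) = (\<Sum>l<b ?t. \<phi>2 ?t i l * M2 al l j')"
          using False by (intro sum.cong) (auto simp: dsum_def \<phi>_def j'_def)
        have C: "(\<Sum>l<c ?s. N al i l * \<phi> ?s l j) = (\<Sum>l<c ?s. N al i l * \<phi>2 ?s l j')"
          using False by (simp add: \<phi>_def j'_def)
        have "delta arr b c M2 N \<phi>2 al i j' = \<psi>2 al i j'" using p2(2) by simp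
        then have "(\<Sum>l<b ?t. \<phi>2 ?t i l * M2 al l j') - (\<Sum>l<c ?s. N al i l * \<phi>2 ?s l j') = \<psi> al i j"
          using j' al ic by (simp add: delta_in \<psi>2_def)
        then show ?thesis using al ic jb by (simp add: delta_in split A B C)
      qed
    qed
  qed
  then show "\<exists>\<phi>\<in>vmaps n (\<lambda>v. a v + b v) c. delta arr (\<lambda>v. a v + b v) c (dsum arr a M1 M2) N \<phi> = \<psi>"
    using pv by blast
qed

definition UT :: "(nat \<times> nat) list \<Rightarrow> (nat \<Rightarrow> nat) \<Rightarrow> (nat \<Rightarrow> nat) \<Rightarrow> 'k::field_char_0 fam \<Rightarrow> bool" where
  "UT arr d1 d2 F \<longleftrightarrow> is_rep arr (\<lambda>v. d1 v + d2 v) F \<and>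
     (\<forall>al i j. d1 (snd (arr!al)) \<le> i \<longrightarrow> j < d1 (fst (arr!al)) \<longrightarrow> F al i j = 0)"

definition blk11 :: "(nat \<times> nat) list \<Rightarrow> (nat \<Rightarrow> nat) \<Rightarrow> 'k::field_char_0 fam \<Rightarrow> 'k fam" where
  "blk11 arr d1 F = (\<lambda>al i j. if i < d1 (snd (arr!al)) \<and> j < d1 (fst (arr!al)) then F al i j else 0)"

definition blk22 :: "(nat \<times> nat) list \<Rightarrow> (nat \<Rightarrow> nat) \<Rightarrow> (nat \<Rightarrow> nat) \<Rightarrow> 'k::field_char_0 fam \<Rightarrow> 'k fam" where
  "blk22 arr d1 d2 F = (\<lambda>al i j. if i < d2 (snd (arr!al)) \<and> j < d2 (fst (arr!al))
      then F al (i + d1 (snd (arr!al))) (j + d1 (fst (arr!al))) else 0)"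

lemma blk11_rep: "is_rep arr (\<lambda>v. d1 v + d2 v) F \<Longrightarrow> is_rep arr d1 (blk11 arr d1 F)"
  unfolding is_rep_def blk11_def by auto

lemma blk22_rep: "is_rep arr (\<lambda>v. d1 v + d2 v) F \<Longrightarrow> is_rep arr d2 (blk22 arr d1 d2 F)"
  unfolding is_rep_def blk22_def by auto

lemma dsum_UT: "is_rep arr d1 M \<Longrightarrow> is_rep arr d2 N \<Longrightarrow> UT arr d1 d2 (dsum arr d1 M N)"
  unfolding UT_def using dsum_rep by (auto simp: dsum_def)

lemma blk11_dsum: "is_rep arr d1 M \<Longrightarrow> blk11 arr d1 (dsum arr d1 M N) = M"
  unfolding is_rep_def blk11_def dsum_def by (auto simp: fun_eq_iff)

lemma blk22_dsum: "is_rep arr d2 N \<Longrightarrow> blk22 arr d1 d2 (dsum arr d1 M N) = N"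
  unfolding is_rep_def blk22_def dsum_def by (auto simp: fun_eq_iff)

lemma pf_blk11: "pf (\<lambda>F. blk11 arr d1 F al i j)"
proof (cases "i < d1 (snd (arr!al)) \<and> j < d1 (fst (arr!al))")
  case True
  then have e: "(\<lambda>F. blk11 arr d1 F al i j) = (\<lambda>F. F al i j)" by (auto simp: blk11_def fun_eq_iff)
  show ?thesis unfolding e by (rule pf_var)
next
  case False
  then have e: "(\<lambda>F. blk11 arr d1 F al i j) = (\<lambda>F. 0)" by (auto simp: blk11_def fun_eq_iff)
  show ?thesis unfolding e by (rule pf_const)
qed

lemma pf_blk22: "pf (\<lambda>F. blk22 arr d1 d2 F al i j)"
proof (cases "i < d2 (snd (arr!al)) \<and> j < d2 (fst (arr!al))")
  case True
  then have e: "(\<lambda>F. blk22 arr d1 d2 F al i j) = (\<lambda>F. F al (i + d1 (snd (arr!al))) (j + d1 (fst (arr!al))))"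
    by (auto simp: blk22_def fun_eq_iff)
  show ?thesis unfolding e by (rule pf_var)
next
  case False
  then have e: "(\<lambda>F. blk22 arr d1 d2 F al i j) = (\<lambda>F. 0)" by (auto simp: blk22_def fun_eq_iff)
  show ?thesis unfolding e by (rule pf_const)
qed

lemma esurj_sub:
  fixes F A :: "'k::field_char_0 fam"
  assumes ut: "UT arr d1 d2 F" and s: "esurj n arr (\<lambda>v. d1 v + d2 v) c F A"
  shows "esurj n arr d1 c (blk11 arr d1 F) A"
  unfolding esurj_def
proof (intro allI impI)
  fix \<psi> :: "'k fam" assume h: "hsupp arr d1 c \<psi>"
  then have "hsupp arr (\<lambda>v. d1 v + d2 v) c \<psi>" by (auto simp: hsupp_def)
  then obtain \<phi> where p: "\<phi> \<in> vmaps n (\<lambda>v. d1 v + d2 v) c" "delta arr (\<lambda>v. d1 v + d2 v) c F A \<phi> = \<psi>"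
    using s by (auto simp: esurj_def)
  define \<phi>1 where "\<phi>1 = (\<lambda>v i j. if j < d1 v then \<phi> v i j else 0)"
  have pv: "\<phi>1 \<in> vmaps n d1 c" using p(1) by (auto simp: vmaps_def \<phi>1_def)
  have "delta arr d1 c (blk11 arr d1 F) A \<phi>1 = \<psi>"
  proof (intro ext)
    fix al i j
    let ?t = "snd (arr!al)" and ?s = "fst (arr!al)"
    show "delta arr d1 c (blk11 arr d1 F) A \<phi>1 al i j = \<psi> al i j"
    proof (cases "al < length arr \<and> i < c ?t \<and> j < d1 ?s")
      case False
      then show ?thesis using h by (auto simp: hsupp_def delta_def)
    next
      case True
      then have al: "al < length arr" and ic: "i < c ?t" and jd: "j < d1 ?s" by auto
      have "(\<Sum>l<d1 ?t + d2 ?t. \<phi> ?t i l * F al l j) = (\<Sum>l<d1 ?t. \<phi> ?t i l * F al l j) + (\<Sum>l<d2 ?t. \<phi> ?t i (l + d1 ?t) * F al (l + d1 ?t) j)"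
        by (rule sum_lt_add)
      also have "(\<Sum>l<d2 ?t. \<phi> ?t i (l + d1 ?t) * F al (l + d1 ?t) j) = 0"
        using ut jd by (intro sum.neutral) (auto simp: UT_def)
      also have "(\<Sum>l<d1 ?t. \<phi> ?t i l * F al l j) = (\<Sum>l<d1 ?t. \<phi>1 ?t i l * blk11 arr d1 F al l j)"
        using jd by (intro sum.cong) (auto simp: \<phi>1_def blk11_def)
      finally have A: "(\<Sum>l<d1 ?t + d2 ?t. \<phi> ?t i l * F al l j) = (\<Sum>l<d1 ?t. \<phi>1 ?t i l * blk11 arr d1 F al l j)" by simp
      have B: "(\<Sum>l<c ?s. A al i l * \<phi> ?s l j) = (\<Sum>l<c ?s. A al i l * \<phi>1 ?s l j)"
        using jd by (simp add: \<phi>1_def)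
      have "delta arr (\<lambda>v. d1 v + d2 v) c F A \<phi> al i j = \<psi> al i j" using p(2) by simp
      then show ?thesis using al ic jd by (simp add: delta_in A B)
    qed
  qed
  then show "\<exists>\<phi>\<in>vmaps n d1 c. delta arr d1 c (blk11 arr d1 F) A \<phi> = \<psi>" using pv by blast
qed

lemma esurj_quot:
  fixes F A :: "'k::field_char_0 fam"
  assumes ut: "UT arr d1 d2 F" and s: "esurj n arr c (\<lambda>v. d1 v + d2 v) A F"
  shows "esurj n arr c d2 A (blk22 arr d1 d2 F)"
  unfolding esurj_def
proof (intro allI impI)
  fix \<psi> :: "'k fam" assume h: "hsupp arr c d2 \<psi>"
  define \<psi>' where "\<psi>' = (\<lambda>al i j. if d1 (snd (arr!al)) \<le> i then \<psi> al (i - d1 (snd (arr!al))) j else 0)"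
  have "hsupp arr c (\<lambda>v. d1 v + d2 v) \<psi>'" using h unfolding hsupp_def \<psi>'_def
    by (auto simp: not_le)
  then obtain \<phi> where p: "\<phi> \<in> vmaps n c (\<lambda>v. d1 v + d2 v)" "delta arr c (\<lambda>v. d1 v + d2 v) A F \<phi> = \<psi>'"
    using s by (auto simp: esurj_def)
  define \<phi>2 where "\<phi>2 = (\<lambda>v i j. if i < d2 v then \<phi> v (i + d1 v) j else 0)"
  have pv: "\<phi>2 \<in> vmaps n c d2" using p(1) by (auto simp: vmaps_def \<phi>2_def)
  have "delta arr c d2 A (blk22 arr d1 d2 F) \<phi>2 = \<psi>"
  proof (intro ext)
    fix al i j
    let ?t = "snd (arr!al)" and ?s = "fst (arr!al)"
    show "delta arr c d2 A (blk22 arr d1 d2 F) \<phi>2 al i j = \<psi> al i j"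
    proof (cases "al < length arr \<and> i < d2 ?t \<and> j < c ?s")
      case False
      then show ?thesis using h by (auto simp: hsupp_def delta_def)
    next
      case True
      then have al: "al < length arr" and id: "i < d2 ?t" and jc: "j < c ?s" by auto
      have "(\<Sum>l<d1 ?s + d2 ?s. F al (i + d1 ?t) l * \<phi> ?s l j) = (\<Sum>l<d1 ?s. F al (i + d1 ?t) l * \<phi> ?s l j) + (\<Sum>l<d2 ?s. F al (i + d1 ?t) (l + d1 ?s) * \<phi> ?s (l + d1 ?s) j)"
        by (rule sum_lt_add)
      also have "(\<Sum>l<d1 ?s. F al (i + d1 ?t) l * \<phi> ?s l j) = 0"
        using ut by (intro sum.neutral) (auto simp: UT_def)
      also have "(\<Sum>l<d2 ?s. F al (i + d1 ?t) (l + d1 ?s) * \<phi> ?s (l + d1 ?s) j) = (\<Sum>l<d2 ?s. blk22 arr d1 d2 F al i l * \<phi>2 ?s l j)"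
        using id by (intro sum.cong) (auto simp: \<phi>2_def blk22_def)
      finally have A: "(\<Sum>l<d1 ?s + d2 ?s. F al (i + d1 ?t) l * \<phi> ?s l j) = (\<Sum>l<d2 ?s. blk22 arr d1 d2 F al i l * \<phi>2 ?s l j)" by simp
      have B: "(\<Sum>l<c ?t. \<phi> ?t (i + d1 ?t) l * A al l j) = (\<Sum>l<c ?t. \<phi>2 ?t i l * A al l j)"
        using id by (simp add: \<phi>2_def)
      have "delta arr c (\<lambda>v. d1 v + d2 v) A F \<phi> al (i + d1 ?t) j = \<psi>' al (i + d1 ?t) j" using p(2) by simp
      then show ?thesis using al id jc by (simp add: delta_in A B \<psi>'_def)
    qed
  qed
  then show "\<exists>\<phi>\<in>vmaps n c d2. delta arr c d2 A (blk22 arr d1 d2 F) \<phi> = \<psi>" using pv by blast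
qed


type_synonym 'k mat2 = "nat \<Rightarrow> nat \<Rightarrow> 'k"

definition mm :: "nat \<Rightarrow> 'k::field_char_0 mat2 \<Rightarrow> 'k mat2 \<Rightarrow> 'k mat2" where
  "mm k A B = (\<lambda>i j. \<Sum>l<k. A i l * B l j)"

definition smat :: "'k::field_char_0 \<Rightarrow> 'k mat2 \<Rightarrow> 'k mat2" where
  "smat c A = (\<lambda>i j. c * A i j)"

lemma mm_assoc: "mm k (mm k' A B) C = mm k' A (mm k B C)"
  unfolding mm_def
  by (auto simp: fun_eq_iff sum_distrib_left sum_distrib_right mult.assoc intro: sum.swap)

lemma mm_assoc_l: "mm k' A (mm k B C) = mm k (mm k' A B) C"
  by (rule mm_assoc[symmetric])

lemma mm_add_l: "mm k (A + B) C = mm k A C + mm k B C"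
  by (simp add: mm_def fun_eq_iff algebra_simps sum.distrib)
lemma mm_add_r: "mm k A (B + C) = mm k A B + mm k A C"
  by (simp add: mm_def fun_eq_iff algebra_simps sum.distrib)
lemma mm_diff_l: "mm k (A - B) C = mm k A C - mm k B C"
  by (simp add: mm_def fun_eq_iff algebra_simps sum_subtractf)
lemma mm_diff_r: "mm k A (B - C) = mm k A B - mm k A C"
  by (simp add: mm_def fun_eq_iff algebra_simps sum_subtractf)
lemma mm_0_l: "mm k 0 C = 0"
  by (simp add: mm_def fun_eq_iff)
lemma mm_0_r: "mm k A 0 = 0"
  by (simp add: mm_def fun_eq_iff)
lemma mm_smat_l: "mm k (smat c A) B = smat c (mm k A B)"
  by (simp add: mm_def smat_def fun_eq_iff sum_distrib_left algebra_simps)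
lemma mm_smat_r: "mm k A (smat c B) = smat c (mm k A B)"
  by (simp add: mm_def smat_def fun_eq_iff sum_distrib_left algebra_simps)
lemma smat_add: "smat c (A + B) = smat c A + smat c B"
  by (simp add: smat_def fun_eq_iff algebra_simps)
lemma smat_diff: "smat c (A - B) = smat c A - smat c B"
  by (simp add: smat_def fun_eq_iff algebra_simps)
lemma smat_smat: "smat c (smat c' A) = smat (c * c') A"
  by (simp add: smat_def fun_eq_iff algebra_simps)

lemmas mm_simps = mm_assoc_l mm_add_l mm_add_r mm_diff_l mm_diff_r mm_0_l mm_0_r mm_smat_l mm_smat_r

definition cj :: "nat \<Rightarrow> nat \<Rightarrow> 'k::field_char_0 mat2 \<Rightarrow> 'k mat2 \<Rightarrow> 'k mat2 \<Rightarrow> 'k mat2" where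
  "cj kt ks T S e = e + mm kt T e - mm ks e S - mm ks (mm kt T e) S"

lemma cj_comp:
  assumes "mm kt T' T = 0" "mm ks S S' = 0"
  shows "cj kt ks T' S' (cj kt ks T S e) = cj kt ks (T' + T) (S' + S) e"
proof -
  have z1: "mm kt (mm kt Z T') T = 0" for Z using assms(1) by (simp add: mm_assoc mm_0_r)
  have z2: "mm ks (mm ks Z S) S' = 0" for Z using assms(2) by (simp add: mm_assoc mm_0_r)
  show ?thesis unfolding cj_def
    by (simp add: mm_simps assms z1 z2 algebra_simps)
qed

lemma cj_zero: "cj kt ks 0 0 e = e"
  by (simp add: cj_def mm_simps)

definition cnj :: "(nat \<times> nat) list \<Rightarrow> (nat \<Rightarrow> nat) \<Rightarrow> 'k::field_char_0 fam \<Rightarrow> 'k fam \<Rightarrow> 'k fam" where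
  "cnj arr d X E = (\<lambda>al. cj (d (snd (arr!al))) (d (fst (arr!al))) (X (snd (arr!al))) (X (fst (arr!al))) (E al))"

definition N21 :: "nat \<Rightarrow> (nat \<Rightarrow> nat) \<Rightarrow> (nat \<Rightarrow> nat) \<Rightarrow> 'k::field_char_0 fam \<Rightarrow> bool" where
  "N21 n d1 d2 X \<longleftrightarrow> X \<in> vmaps n (\<lambda>v. d1 v + d2 v) (\<lambda>v. d1 v + d2 v) \<and>
     (\<forall>v i j. X v i j \<noteq> 0 \<longrightarrow> d1 v \<le> i \<and> j < d1 v)"

lemma N21_mm: "N21 n d1 d2 X \<Longrightarrow> N21 n d1 d2 Y \<Longrightarrow> mm k (X v) (Y v) = 0"
  unfolding N21_def mm_def by (auto simp: fun_eq_iff intro!: sum.neutral) (metis leD)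

lemma N21_add: "N21 n d1 d2 X \<Longrightarrow> N21 n d1 d2 Y \<Longrightarrow> N21 n d1 d2 (X + Y)"
  unfolding N21_def vmaps_def by (auto) (metis add.right_neutral)+

lemma N21_neg: "N21 n d1 d2 X \<Longrightarrow> N21 n d1 d2 (- X)"
  unfolding N21_def vmaps_def by auto

lemma N21_zero: "N21 n d1 d2 0"
  unfolding N21_def vmaps_def by auto

lemma N21_scale: "N21 n d1 d2 X \<Longrightarrow> N21 n d1 d2 (\<lambda>v. smat c (X v))"
  unfolding N21_def vmaps_def smat_def by auto

lemma conj_comp:
  assumes "N21 n d1 d2 X" "N21 n d1 d2 Y"
  shows "cnj arr (\<lambda>v. d1 v + d2 v) X (cnj arr (\<lambda>v. d1 v + d2 v) Y E) = cnj arr (\<lambda>v. d1 v + d2 v) (X + Y) E"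
  unfolding cnj_def using N21_mm[OF assms(1,2)] N21_mm[OF assms(2,1)]
  by (simp add: cj_comp fun_eq_iff del: plus_fun_apply) (simp add: plus_fun_def)

lemma conj_zero: "cnj arr d 0 E = E"
  unfolding cnj_def by (simp only: zero_fun_apply cj_zero)

lemma conj_inv:
  assumes "N21 n d1 d2 X"
  shows "cnj arr (\<lambda>v. d1 v + d2 v) X (cnj arr (\<lambda>v. d1 v + d2 v) (- X) E) = E"
  using conj_comp[OF assms N21_neg[OF assms]] by (simp add: conj_zero)

lemma conj_inv2:
  assumes "N21 n d1 d2 X"
  shows "cnj arr (\<lambda>v. d1 v + d2 v) (- X) (cnj arr (\<lambda>v. d1 v + d2 v) X E) = E"
  using conj_comp[OF N21_neg[OF assms] assms] by (simp add: conj_zero)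


definition msupp :: "nat \<Rightarrow> nat \<Rightarrow> 'k::field_char_0 mat2 \<Rightarrow> bool" where
  "msupp r c A \<longleftrightarrow> (\<forall>i j. \<not> (i < r \<and> j < c) \<longrightarrow> A i j = 0)"

lemma msupp_mm: "msupp r k0 A \<Longrightarrow> msupp k1 c B \<Longrightarrow> msupp r c (mm k A B)"
  unfolding msupp_def mm_def by (auto intro!: sum.neutral)

lemma msupp_add: "msupp r c A \<Longrightarrow> msupp r c B \<Longrightarrow> msupp r c (A + B)"
  unfolding msupp_def by auto
lemma msupp_diff: "msupp r c A \<Longrightarrow> msupp r c B \<Longrightarrow> msupp r c (A - B)"
  unfolding msupp_def by auto
lemma msupp_0: "msupp r c 0"
  unfolding msupp_def by auto

lemma hsupp_iff: "hsupp arr a b \<psi> \<longleftrightarrow> (\<forall>al. (al < length arr \<longrightarrow> msupp (b (snd (arr!al))) (a (fst (arr!al))) (\<psi> al))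
   \<and> (\<not> al < length arr \<longrightarrow> \<psi> al = 0))"
  unfolding hsupp_def msupp_def by (auto simp: fun_eq_iff)

lemma vmaps_iff: "\<phi> \<in> vmaps n a b \<longleftrightarrow> (\<forall>v. (v < n \<longrightarrow> msupp (b v) (a v) (\<phi> v)) \<and> (\<not> v < n \<longrightarrow> \<phi> v = 0))"
  unfolding vmaps_def msupp_def by (auto simp: fun_eq_iff)

lemma vm_msupp: "\<phi> \<in> vmaps n a b \<Longrightarrow> msupp (b v) (a v) (\<phi> v)"
  unfolding vmaps_def msupp_def by auto

lemma cj_msupp: "msupp kt ks e \<Longrightarrow> msupp kt kt T \<Longrightarrow> msupp ks ks S \<Longrightarrow> msupp kt ks (cj kt ks T S e)"
  unfolding cj_def by (intro msupp_diff msupp_add msupp_mm) (auto intro: msupp_mm)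

lemma cj_0: "cj kt ks T S 0 = 0"
  by (simp add: cj_def mm_simps)

lemma conj_rep:
  assumes "is_rep arr d E" "X \<in> vmaps n d d"
  shows "is_rep arr d (cnj arr d X E)"
  unfolding is_rep_hsupp hsupp_iff
proof (intro allI conjI impI)
  fix al assume al: "al < length arr"
  have "msupp (d (snd (arr!al))) (d (fst (arr!al))) (E al)" using assms(1) al unfolding is_rep_hsupp hsupp_iff by blast
  then show "msupp (d (snd (arr!al))) (d (fst (arr!al))) (cnj arr d X E al)"
    unfolding cnj_def by (intro cj_msupp vm_msupp[OF assms(2)])
next
  fix al assume al: "\<not> al < length arr"
  have "E al = 0" using assms(1) al unfolding is_rep_hsupp hsupp_iff by blast
  then show "cnj arr d X E al = 0" by (simp add: cnj_def cj_0)
qed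

lemma delta_mm:
  assumes "\<phi> \<in> vmaps n a b" "is_rep arr a M" "is_rep arr b N"
  shows "delta arr a b M N \<phi> al = (if al < length arr then
     mm (a (snd (arr!al))) (\<phi> (snd (arr!al))) (M al) - mm (b (fst (arr!al))) (N al) (\<phi> (fst (arr!al))) else 0)"
proof (cases "al < length arr")
  case True
  let ?t = "snd (arr!al)" and ?s = "fst (arr!al)"
  have ms: "msupp (b ?t) (a ?s) (mm (a ?t) (\<phi> ?t) (M al) - mm (b ?s) (N al) (\<phi> ?s))"
  proof -
    have mM: "msupp (a ?t) (a ?s) (M al)" using assms(2) True unfolding is_rep_hsupp hsupp_iff by blast
    have mN: "msupp (b ?t) (b ?s) (N al)" using assms(3) True unfolding is_rep_hsupp hsupp_iff by blast
    show ?thesis by (rule msupp_diff[OF msupp_mm[OF vm_msupp[OF assms(1)] mM] msupp_mm[OF mN vm_msupp[OF assms(1)]]])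
  qed
  show ?thesis
  proof (intro ext)
    fix i j
    show "delta arr a b M N \<phi> al i j = (if al < length arr then mm (a ?t) (\<phi> ?t) (M al) - mm (b ?s) (N al) (\<phi> ?s) else 0) i j"
      using True ms by (cases "i < b ?t \<and> j < a ?s") (auto simp: delta_def mm_def msupp_def)
  qed
next
  case False then show ?thesis by (auto simp: delta_def fun_eq_iff)
qed

lemma ET1_alg:
  assumes TT: "mm kt T T = 0" and SS: "mm ks S S = 0"
    and K: "mm kt P e - mm kb Aa Q = \<Psi> + mm ks \<Psi> S"
  shows "mm kt (P - mm kt P T) (cj kt ks T S e) - mm kb Aa (Q - mm ks Q S) = \<Psi>"
proof -
  have z1: "mm kt (mm kt Z T) T = 0" for Z using TT by (simp add: mm_assoc mm_0_r)
  have z2: "mm ks (mm ks Z S) S = 0" for Z using SS by (simp add: mm_assoc mm_0_r)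
  have "mm kt (P - mm kt P T) (cj kt ks T S e) - mm kb Aa (Q - mm ks Q S)
      = (mm kt P e - mm kb Aa Q) - mm ks (mm kt P e - mm kb Aa Q) S"
    unfolding cj_def by (simp add: mm_simps TT SS z1 z2 algebra_simps)
  also have "\<dots> = \<Psi>" unfolding K by (simp add: mm_simps z2)
  finally show ?thesis .
qed

lemma ET2_alg:
  assumes TT: "mm kt T T = 0" and SS: "mm ks S S = 0"
    and K: "mm kb P Aa - mm ks e Q = \<Psi> - mm kt T \<Psi>"
  shows "mm kb (P + mm kt T P) Aa - mm ks (cj kt ks T S e) (Q + mm ks S Q) = \<Psi>"
proof -
  have z1: "mm kt (mm kt Z T) T = 0" for Z using TT by (simp add: mm_assoc mm_0_r)
  have z2: "mm ks (mm ks Z S) S = 0" for Z using SS by (simp add: mm_assoc mm_0_r)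
  have "mm kb (P + mm kt T P) Aa - mm ks (cj kt ks T S e) (Q + mm ks S Q)
      = (mm kb P Aa - mm ks e Q) + mm kt T (mm kb P Aa - mm ks e Q)"
    unfolding cj_def by (simp add: mm_simps TT SS z1 z2 algebra_simps)
  also have "\<dots> = \<Psi>" unfolding K by (simp add: mm_simps TT)
  finally show ?thesis .
qed

lemma esurj_conj_src:
  fixes E A X :: "'k::field_char_0 fam"
  assumes E: "is_rep arr d E" and A: "is_rep arr b A" and X: "X \<in> vmaps n d d"
    and XX: "\<And>v. mm (d v) (X v) (X v) = 0" and s: "esurj n arr d b E A"
  shows "esurj n arr d b (cnj arr d X E) A"
  unfolding esurj_def
proof (intro allI impI)
  fix \<psi> :: "'k fam" assume h: "hsupp arr d b \<psi>"
  define \<psi>' where "\<psi>' = (\<lambda>al. \<psi> al + mm (d (fst (arr!al))) (\<psi> al) (X (fst (arr!al))))"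
  have "hsupp arr d b \<psi>'" unfolding hsupp_iff
  proof (intro allI conjI impI)
    fix al assume al: "al < length arr"
    have m: "msupp (b (snd (arr!al))) (d (fst (arr!al))) (\<psi> al)" using h al unfolding hsupp_iff by blast
    show "msupp (b (snd (arr!al))) (d (fst (arr!al))) (\<psi>' al)"
      unfolding \<psi>'_def by (rule msupp_add[OF m msupp_mm[OF m vm_msupp[OF X]]])
  next
    fix al assume al: "\<not> al < length arr"
    then have "\<psi> al = 0" using h unfolding hsupp_iff by blast
    then show "\<psi>' al = 0" by (simp add: \<psi>'_def mm_0_l)
  qed
  then obtain \<phi>' where p: "\<phi>' \<in> vmaps n d b" "delta arr d b E A \<phi>' = \<psi>'" using s by (auto simp: esurj_def)
  define \<phi> where "\<phi> = (\<lambda>v. \<phi>' v - mm (d v) (\<phi>' v) (X v))"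
  have pv: "\<phi> \<in> vmaps n d b" using p(1) X unfolding vmaps_iff \<phi>_def
    by (auto intro!: msupp_diff msupp_mm simp: mm_0_l)
  have cr: "is_rep arr d (cnj arr d X E)" by (rule conj_rep[OF E X])
  have "delta arr d b (cnj arr d X E) A \<phi> = \<psi>"
  proof (rule ext)
    fix al
    show "delta arr d b (cnj arr d X E) A \<phi> al = \<psi> al"
    proof (cases "al < length arr")
      case True
      have "delta arr d b E A \<phi>' al = \<psi>' al" using p(2) by simp
      then have K: "mm (d (snd (arr!al))) (\<phi>' (snd (arr!al))) (E al) - mm (b (fst (arr!al))) (A al) (\<phi>' (fst (arr!al)))
          = \<psi> al + mm (d (fst (arr!al))) (\<psi> al) (X (fst (arr!al)))"
        using True delta_mm[OF p(1) E A] by (simp add: \<psi>'_def)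
      show ?thesis using True delta_mm[OF pv cr A] ET1_alg[OF XX XX K] by (simp add: cnj_def \<phi>_def)
    next
      case False then show ?thesis using h delta_mm[OF pv cr A] by (simp add: hsupp_iff)
    qed
  qed
  then show "\<exists>\<phi>\<in>vmaps n d b. delta arr d b (cnj arr d X E) A \<phi> = \<psi>" using pv by blast
qed

lemma esurj_conj_tgt:
  fixes E A X :: "'k::field_char_0 fam"
  assumes E: "is_rep arr d E" and A: "is_rep arr b A" and X: "X \<in> vmaps n d d"
    and XX: "\<And>v. mm (d v) (X v) (X v) = 0" and s: "esurj n arr b d A E"
  shows "esurj n arr b d A (cnj arr d X E)"
  unfolding esurj_def
proof (intro allI impI)
  fix \<psi> :: "'k fam" assume h: "hsupp arr b d \<psi>"
  define \<psi>' where "\<psi>' = (\<lambda>al. \<psi> al - mm (d (snd (arr!al))) (X (snd (arr!al))) (\<psi> al))"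
  have "hsupp arr b d \<psi>'" unfolding hsupp_iff
  proof (intro allI conjI impI)
    fix al assume al: "al < length arr"
    have m: "msupp (d (snd (arr!al))) (b (fst (arr!al))) (\<psi> al)" using h al unfolding hsupp_iff by blast
    show "msupp (d (snd (arr!al))) (b (fst (arr!al))) (\<psi>' al)"
      unfolding \<psi>'_def by (rule msupp_diff[OF m msupp_mm[OF vm_msupp[OF X] m]])
  next
    fix al assume al: "\<not> al < length arr"
    then have "\<psi> al = 0" using h unfolding hsupp_iff by blast
    then show "\<psi>' al = 0" by (simp add: \<psi>'_def mm_0_r)
  qed
  then obtain \<phi>' where p: "\<phi>' \<in> vmaps n b d" "delta arr b d A E \<phi>' = \<psi>'" using s by (auto simp: esurj_def)
  define \<phi> where "\<phi> = (\<lambda>v. \<phi>' v + mm (d v) (X v) (\<phi>' v))"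
  have pv: "\<phi> \<in> vmaps n b d" using p(1) X unfolding vmaps_iff \<phi>_def
    by (auto intro!: msupp_add msupp_mm simp: mm_0_r)
  have cr: "is_rep arr d (cnj arr d X E)" by (rule conj_rep[OF E X])
  have "delta arr b d A (cnj arr d X E) \<phi> = \<psi>"
  proof (rule ext)
    fix al
    show "delta arr b d A (cnj arr d X E) \<phi> al = \<psi> al"
    proof (cases "al < length arr")
      case True
      have "delta arr b d A E \<phi>' al = \<psi>' al" using p(2) by simp
      then have K: "mm (b (snd (arr!al))) (\<phi>' (snd (arr!al))) (A al) - mm (d (fst (arr!al))) (E al) (\<phi>' (fst (arr!al)))
          = \<psi> al - mm (d (snd (arr!al))) (X (snd (arr!al))) (\<psi> al)"
        using True delta_mm[OF p(1) A E] by (simp add: \<psi>'_def)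
      show ?thesis using True delta_mm[OF pv A cr] ET2_alg[OF XX XX K] by (simp add: cnj_def \<phi>_def)
    next
      case False then show ?thesis using h delta_mm[OF pv A cr] by (simp add: hsupp_iff)
    qed
  qed
  then show "\<exists>\<phi>\<in>vmaps n b d. delta arr b d A (cnj arr d X E) \<phi> = \<psi>" using pv by blast
qed

lemma line_mat: "line E w t al = E al + smat t (w al)"
  by (simp add: line_def smat_def fun_eq_iff)

lemma cj_lin: "cj kt ks T S (e + smat c w) = cj kt ks T S e + smat c (cj kt ks T S w)"
  by (simp add: cj_def mm_simps smat_add smat_diff algebra_simps)

lemma conj_line: "cnj arr d X (line E w t) = line (cnj arr d X E) (cnj arr d X w) t"
  by (rule ext) (simp add: cnj_def line_mat cj_lin)

lemma pf_multc: "pf f \<Longrightarrow> pf (\<lambda>F. f F * c)"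
  using pf_cmult[of f c] by (simp add: mult.commute)

lemma pf_conj: "pf (\<lambda>F. cnj arr d X F al i j)"
proof -
  let ?kt = "d (snd (arr!al))" and ?ks = "d (fst (arr!al))" and ?T = "X (snd (arr!al))" and ?S = "X (fst (arr!al))"
  have p1: "pf (\<lambda>F. F al i j)" by (rule pf_var)
  have p2: "pf (\<lambda>F. \<Sum>l<?kt. ?T i l * F al l j)" by (rule pf_sum, rule pf_cmult, rule pf_var)
  have p3: "pf (\<lambda>F. \<Sum>l<?ks. F al i l * ?S l j)" by (rule pf_sum, rule pf_multc, rule pf_var)
  have p4: "pf (\<lambda>F. \<Sum>l<?ks. (\<Sum>m<?kt. ?T i m * F al m l) * ?S l j)"
    by (rule pf_sum, rule pf_multc, rule pf_sum, rule pf_cmult, rule pf_var)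
  have eq: "(\<lambda>F. cnj arr d X F al i j) = (\<lambda>F. F al i j + (\<Sum>l<?kt. ?T i l * F al l j) - (\<Sum>l<?ks. F al i l * ?S l j)
      - (\<Sum>l<?ks. (\<Sum>m<?kt. ?T i m * F al m l) * ?S l j))"
    by (simp add: cnj_def cj_def mm_def fun_eq_iff)
  show ?thesis unfolding eq by (rule pf_minus[OF pf_minus[OF pf_add[OF p1 p2] p3] p4])
qed

definition comm :: "(nat \<times> nat) list \<Rightarrow> (nat \<Rightarrow> nat) \<Rightarrow> 'k::field_char_0 fam \<Rightarrow> 'k fam \<Rightarrow> 'k fam" where
  "comm arr d Y F = (\<lambda>al. mm (d (snd (arr!al))) (Y (snd (arr!al))) (F al) - mm (d (fst (arr!al))) (F al) (Y (fst (arr!al))))"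

definition yfy :: "(nat \<times> nat) list \<Rightarrow> (nat \<Rightarrow> nat) \<Rightarrow> 'k::field_char_0 fam \<Rightarrow> 'k fam \<Rightarrow> 'k fam" where
  "yfy arr d Y F = (\<lambda>al. mm (d (fst (arr!al))) (mm (d (snd (arr!al))) (Y (snd (arr!al))) (F al)) (Y (fst (arr!al))))"

lemma cj_smat: "cj kt ks (smat t T) (smat t S) e = e + smat t (mm kt T e - mm ks e S) - smat (t * t) (mm ks (mm kt T e) S)"
  by (simp add: cj_def mm_simps smat_diff smat_smat)

lemma conj_curve: "cnj arr d (\<lambda>v. smat t (Y v)) F =
   ccurve (\<lambda>al i j. [:F al i j, comm arr d Y F al i j, - yfy arr d Y F al i j:]) t"
proof -
  have "cnj arr d (\<lambda>v. smat t (Y v)) F = (\<lambda>al. F al + smat t (comm arr d Y F al) - smat (t*t) (yfy arr d Y F al))"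
    by (simp add: cnj_def cj_smat comm_def yfy_def)
  then show ?thesis by (simp add: ccurve_def smat_def fun_eq_iff algebra_simps)
qed

lemma c0_curve: "c0 (\<lambda>al i j. [:F al i j, comm arr d Y F al i j, - yfy arr d Y F al i j:]) = F"
  by (simp add: c0_def)
lemma c1_curve: "c1 (\<lambda>al i j. [:F al i j, comm arr d Y F al i j, - yfy arr d Y F al i j:]) = comm arr d Y F"
  by (simp add: c1_def)

lemma comm_rep: "is_rep arr d F \<Longrightarrow> Y \<in> vmaps n d d \<Longrightarrow> is_rep arr d (comm arr d Y F)"
  unfolding is_rep_hsupp hsupp_iff
proof (intro allI conjI impI)
  fix al assume F: "\<forall>al. (al < length arr \<longrightarrow> msupp (d (snd (arr!al))) (d (fst (arr!al))) (F al)) \<and> (\<not> al < length arr \<longrightarrow> F al = 0)"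
    and Y: "Y \<in> vmaps n d d"
  {
    assume al: "al < length arr"
    have m: "msupp (d (snd (arr!al))) (d (fst (arr!al))) (F al)" using F al by blast
    show "msupp (d (snd (arr!al))) (d (fst (arr!al))) (comm arr d Y F al)"
      unfolding comm_def by (rule msupp_diff[OF msupp_mm[OF vm_msupp[OF Y] m] msupp_mm[OF m vm_msupp[OF Y]]])
  }
  {
    assume al: "\<not> al < length arr"
    then have "F al = 0" using F by blast
    then show "comm arr d Y F al = 0" by (simp add: comm_def mm_0_l mm_0_r)
  }
qed


definition wLL :: "(nat \<times> nat) list \<Rightarrow> (nat \<Rightarrow> nat) \<Rightarrow> 'k::field_char_0 fam \<Rightarrow> 'k fam" where
  "wLL arr d1 w = (\<lambda>al i j. if d1 (snd (arr!al)) \<le> i \<and> j < d1 (fst (arr!al)) then w al i j else 0)"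
definition wUU :: "(nat \<times> nat) list \<Rightarrow> (nat \<Rightarrow> nat) \<Rightarrow> 'k::field_char_0 fam \<Rightarrow> 'k fam" where
  "wUU arr d1 w = (\<lambda>al i j. if d1 (snd (arr!al)) \<le> i \<and> j < d1 (fst (arr!al)) then 0 else w al i j)"

lemma w_split: "fadd (wUU arr d1 w) (wLL arr d1 w) = w"
  by (auto simp: fadd_def wUU_def wLL_def fun_eq_iff)

lemma wUU_UT: "is_rep arr (\<lambda>v. d1 v + d2 v) w \<Longrightarrow> UT arr d1 d2 (wUU arr d1 w)"
  unfolding UT_def is_rep_def wUU_def by auto

lemma line_UT: "UT arr d1 d2 F \<Longrightarrow> UT arr d1 d2 W \<Longrightarrow> UT arr d1 d2 (line F W t)"
  unfolding UT_def is_rep_def line_def by auto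

lemma UT_lclosed: "lclosed {F. UT arr d1 d2 F}"
  unfolding lclosed_def UT_def is_rep_def line_def by auto

lemma rep_lclosed: "lclosed {F. is_rep arr d F}"
  unfolding lclosed_def is_rep_def line_def by auto

lemma UT_zero: "UT arr d1 d2 (\<lambda>al i j. 0)"
  unfolding UT_def is_rep_def by auto

definition VO :: "nat \<Rightarrow> (nat \<times> nat) list \<Rightarrow> (nat \<Rightarrow> nat) \<Rightarrow> (nat \<Rightarrow> nat) \<Rightarrow> ('k::field_char_0 fam \<Rightarrow> 'k) \<Rightarrow> bool" where
  "VO n arr d1 d2 h \<longleftrightarrow> pf h \<and> (\<forall>X F. N21 n d1 d2 X \<longrightarrow> UT arr d1 d2 F \<longrightarrow> h (cnj arr (\<lambda>v. d1 v + d2 v) X F) = 0)"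

lemma base_U:
  assumes "VO n arr d1 d2 h" "UT arr d1 d2 F" "UT arr d1 d2 W"
  shows "Dd h F W = 0"
proof (rule Dd_line_zero)
  show "pf h" using assms(1) by (simp add: VO_def)
  fix t
  have "h (cnj arr (\<lambda>v. d1 v + d2 v) 0 (line F W t)) = 0"
    using assms line_UT N21_zero unfolding VO_def by blast
  then show "h (line F W t) = 0" by (simp add: conj_zero)
qed

definition Yof :: "(nat \<Rightarrow> nat) \<Rightarrow> 'k::field_char_0 fam \<Rightarrow> 'k fam" where
  "Yof d1 \<phi> = (\<lambda>v i j. if d1 v \<le> i then \<phi> v (i - d1 v) j else 0)"

lemma Yof_N21:
  assumes ph: "\<phi> \<in> vmaps n d1 d2"
  shows "N21 n d1 d2 (Yof d1 \<phi>)"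
proof -
  have key: "v < n \<and> d1 v \<le> i \<and> i < d1 v + d2 v \<and> j < d1 v" if nz: "Yof d1 \<phi> v i j \<noteq> 0" for v i j
  proof -
    have c: "d1 v \<le> i" "\<phi> v (i - d1 v) j \<noteq> 0" using nz by (auto simp: Yof_def split: if_splits)
    then have "v < n \<and> i - d1 v < d2 v \<and> j < d1 v" using ph unfolding vmaps_def by blast
    then show ?thesis using c(1) by linarith
  qed
  show ?thesis unfolding N21_def vmaps_def mem_Collect_eq
  proof (rule conjI)
    show "\<forall>v i j. \<not> (v < n \<and> i < d1 v + d2 v \<and> j < d1 v + d2 v) \<longrightarrow> Yof d1 \<phi> v i j = 0"
    proof (intro allI impI)
      fix v i j assume nr: "\<not> (v < n \<and> i < d1 v + d2 v \<and> j < d1 v + d2 v)"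
      show "Yof d1 \<phi> v i j = 0"
      proof (rule ccontr)
        assume "Yof d1 \<phi> v i j \<noteq> 0"
        then show False using key[of v i j] nr by linarith
      qed
    qed
  next
    show "\<forall>v i j. Yof d1 \<phi> v i j \<noteq> 0 \<longrightarrow> d1 v \<le> i \<and> j < d1 v" using key by blast
  qed
qed

lemma N21_vmaps: "N21 n d1 d2 X \<Longrightarrow> X \<in> vmaps n (\<lambda>v. d1 v + d2 v) (\<lambda>v. d1 v + d2 v)"
  by (simp add: N21_def)

lemma LL_comm:
  assumes G: "UT arr d1 d2 G" and \<phi>: "\<phi> \<in> vmaps n d1 d2"
  shows "wLL arr d1 (comm arr (\<lambda>v. d1 v + d2 v) (Yof d1 \<phi>) G) = (\<lambda>al i j.
    if d1 (snd (arr!al)) \<le> i \<and> j < d1 (fst (arr!al))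
    then delta arr d1 d2 (blk11 arr d1 G) (blk22 arr d1 d2 G) \<phi> al (i - d1 (snd (arr!al))) j else 0)"
proof (intro ext)
  fix al i j
  let ?t = "snd (arr!al)" and ?s = "fst (arr!al)"
  let ?Y = "Yof d1 \<phi>"
  let ?C = "comm arr (\<lambda>v. d1 v + d2 v) ?Y G"
  show "wLL arr d1 ?C al i j = (if d1 ?t \<le> i \<and> j < d1 ?s
    then delta arr d1 d2 (blk11 arr d1 G) (blk22 arr d1 d2 G) \<phi> al (i - d1 ?t) j else 0)"
  proof (cases "d1 ?t \<le> i \<and> j < d1 ?s")
    case False then show ?thesis by (auto simp: wLL_def)
  next
    case True
    then have it: "d1 ?t \<le> i" and js: "j < d1 ?s" by auto
    define i' where "i' = i - d1 ?t"
    have ii: "i = i' + d1 ?t" using it by (simp add: i'_def)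
    have Grep: "is_rep arr (\<lambda>v. d1 v + d2 v) G" and GLL: "\<And>al i j. d1 (snd (arr!al)) \<le> i \<Longrightarrow> j < d1 (fst (arr!al)) \<Longrightarrow> G al i j = 0"
      using G by (auto simp: UT_def)
    have phz: "\<And>v i j. \<not> (v < n \<and> i < d2 v \<and> j < d1 v) \<Longrightarrow> \<phi> v i j = 0" using \<phi> by (auto simp: vmaps_def)
    have C: "?C al i j = (\<Sum>l<d1 ?t + d2 ?t. ?Y ?t i l * G al l j) - (\<Sum>l<d1 ?s + d2 ?s. G al i l * ?Y ?s l j)"
      by (simp add: comm_def mm_def)
    have S1: "(\<Sum>l<d1 ?t + d2 ?t. ?Y ?t i l * G al l j) = (\<Sum>l<d1 ?t. \<phi> ?t i' l * blk11 arr d1 G al l j)"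
    proof -
      have "(\<Sum>l<d1 ?t + d2 ?t. ?Y ?t i l * G al l j) = (\<Sum>l<d1 ?t. ?Y ?t i l * G al l j) + (\<Sum>l<d2 ?t. ?Y ?t i (l + d1 ?t) * G al (l + d1 ?t) j)"
        by (rule sum_lt_add)
      also have "(\<Sum>l<d2 ?t. ?Y ?t i (l + d1 ?t) * G al (l + d1 ?t) j) = 0"
        using it phz by (intro sum.neutral) (auto simp: Yof_def)
      also have "(\<Sum>l<d1 ?t. ?Y ?t i l * G al l j) = (\<Sum>l<d1 ?t. \<phi> ?t i' l * blk11 arr d1 G al l j)"
        using it js by (intro sum.cong) (auto simp: Yof_def blk11_def i'_def)
      finally show ?thesis by simp
    qed
    have S2: "(\<Sum>l<d1 ?s + d2 ?s. G al i l * ?Y ?s l j) = (\<Sum>l<d2 ?s. blk22 arr d1 d2 G al i' l * \<phi> ?s l j)"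
    proof -
      have "(\<Sum>l<d1 ?s + d2 ?s. G al i l * ?Y ?s l j) = (\<Sum>l<d1 ?s. G al i l * ?Y ?s l j) + (\<Sum>l<d2 ?s. G al i (l + d1 ?s) * ?Y ?s (l + d1 ?s) j)"
        by (rule sum_lt_add)
      also have "(\<Sum>l<d1 ?s. G al i l * ?Y ?s l j) = 0"
        by (intro sum.neutral) (auto simp: Yof_def)
      also have "(\<Sum>l<d2 ?s. G al i (l + d1 ?s) * ?Y ?s (l + d1 ?s) j) = (\<Sum>l<d2 ?s. blk22 arr d1 d2 G al i' l * \<phi> ?s l j)"
      proof (rule sum.cong[OF refl])
        fix l assume l: "l \<in> {..<d2 ?s}"
        show "G al i (l + d1 ?s) * ?Y ?s (l + d1 ?s) j = blk22 arr d1 d2 G al i' l * \<phi> ?s l j"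
        proof (cases "i' < d2 ?t")
          case True then show ?thesis using l ii by (simp add: Yof_def blk22_def)
        next
          case False
          then have "G al i (l + d1 ?s) = 0" using Grep ii unfolding is_rep_def by auto
          then show ?thesis using False by (simp add: blk22_def)
        qed
      qed
      finally show ?thesis by simp
    qed
    have D: "delta arr d1 d2 (blk11 arr d1 G) (blk22 arr d1 d2 G) \<phi> al i' j =
       (\<Sum>l<d1 ?t. \<phi> ?t i' l * blk11 arr d1 G al l j) - (\<Sum>l<d2 ?s. blk22 arr d1 d2 G al i' l * \<phi> ?s l j)"
    proof (cases "al < length arr \<and> i' < d2 ?t")
      case True then show ?thesis using js by (simp add: delta_in)
    next
      case False
      then have "delta arr d1 d2 (blk11 arr d1 G) (blk22 arr d1 d2 G) \<phi> al i' j = 0" by (auto simp: delta_def)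
      moreover have "(\<Sum>l<d1 ?t. \<phi> ?t i' l * blk11 arr d1 G al l j) = 0"
        using False phz Grep by (intro sum.neutral) (auto simp: blk11_def is_rep_def)
      moreover have "(\<Sum>l<d2 ?s. blk22 arr d1 d2 G al i' l * \<phi> ?s l j) = 0"
        using False Grep by (intro sum.neutral) (auto simp: blk22_def is_rep_def)
      ultimately show ?thesis by simp
    qed
    show ?thesis using True C S1 S2 D by (simp add: wLL_def i'_def)
  qed
qed

lemma base_lemma:
  fixes h g0 :: "'k::field_char_0 fam \<Rightarrow> 'k" and F w G0 :: "'k fam"
  assumes V: "VO n arr d1 d2 h" and F: "UT arr d1 d2 F" and w: "is_rep arr (\<lambda>v. d1 v + d2 v) w"
    and g0: "pf g0" "UT arr d1 d2 G0" "g0 G0 \<noteq> 0"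
    and good: "\<And>G. g0 G \<noteq> 0 \<Longrightarrow> esurj n arr d1 d2 (blk11 arr d1 G) (blk22 arr d1 d2 G)"
  shows "Dd h F w = 0"
proof -
  have ph: "pf h" using V by (simp add: VO_def)
  have "Dd h F w = Dd h F (wUU arr d1 w) + Dd h F (wLL arr d1 w)"
    using Dd_add[OF ph] w_split by metis
  moreover have "Dd h F (wUU arr d1 w) = 0" by (rule base_U[OF V F wUU_UT[OF w]])
  moreover have "Dd h F (wLL arr d1 w) = 0"
  proof (rule vanish_open[of "{F. UT arr d1 d2 F}" g0 "\<lambda>G. Dd h G (wLL arr d1 w)" G0 F])
    show "lclosed {F. UT arr d1 d2 F}" by (rule UT_lclosed)
    show "pf g0" by (rule g0(1))
    show "pf (\<lambda>G. Dd h G (wLL arr d1 w))" by (rule pf_Dd[OF ph])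
    show "g0 G0 \<noteq> 0" by (rule g0(3))
    show "G0 \<in> {F. UT arr d1 d2 F}" using g0(2) by simp
    show "F \<in> {F. UT arr d1 d2 F}" using F by simp
    show "\<forall>G\<in>{F. UT arr d1 d2 F}. g0 G \<noteq> 0 \<longrightarrow> Dd h G (wLL arr d1 w) = 0"
    proof (intro ballI impI)
      fix G assume G: "G \<in> {F. UT arr d1 d2 F}" and gG: "g0 G \<noteq> 0"
      then have UG: "UT arr d1 d2 G" by simp
      define \<psi> where "\<psi> = (\<lambda>al i j. if j < d1 (fst (arr!al)) \<and> i < d2 (snd (arr!al)) then w al (i + d1 (snd (arr!al))) j else 0)"
      have "hsupp arr d1 d2 \<psi>" using w unfolding hsupp_def \<psi>_def is_rep_def by auto
      then obtain \<phi> where ph1: "\<phi> \<in> vmaps n d1 d2" "delta arr d1 d2 (blk11 arr d1 G) (blk22 arr d1 d2 G) \<phi> = \<psi>"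
        using good[OF gG] by (auto simp: esurj_def)
      define Y where "Y = Yof d1 \<phi>"
      have NY: "N21 n d1 d2 Y" unfolding Y_def by (rule Yof_N21[OF ph1(1)])
      let ?C = "comm arr (\<lambda>v. d1 v + d2 v) Y G"
      have LL: "wLL arr d1 ?C = wLL arr d1 w"
      proof -
        have "wLL arr d1 ?C = (\<lambda>al i j. if d1 (snd (arr!al)) \<le> i \<and> j < d1 (fst (arr!al))
           then \<psi> al (i - d1 (snd (arr!al))) j else 0)"
          using LL_comm[OF UG ph1(1), unfolded ph1(2)] unfolding Y_def by simp
        also have "\<dots> = wLL arr d1 w"
        proof (intro ext)
          fix al i j
          have wz: "\<not> i < d1 (snd (arr!al)) + d2 (snd (arr!al)) \<Longrightarrow> w al i j = 0"
            using w by (auto simp: is_rep_def)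
          show "(if d1 (snd (arr!al)) \<le> i \<and> j < d1 (fst (arr!al)) then \<psi> al (i - d1 (snd (arr!al))) j else 0) = wLL arr d1 w al i j"
          proof (cases "d1 (snd (arr!al)) \<le> i \<and> j < d1 (fst (arr!al))")
            case False then show ?thesis by (auto simp: wLL_def)
          next
            case True
            show ?thesis
            proof (cases "i - d1 (snd (arr!al)) < d2 (snd (arr!al))")
              case True2: True
              then show ?thesis using True by (simp add: \<psi>_def wLL_def)
            next
              case False
              then have "\<not> i < d1 (snd (arr!al)) + d2 (snd (arr!al))" using True by linarith
              then show ?thesis using True False wz by (simp add: \<psi>_def wLL_def)
            qed
          qed
        qed
        finally show ?thesis .
      qed
      have Crep: "is_rep arr (\<lambda>v. d1 v + d2 v) ?C"
        using UG NY by (intro comm_rep N21_vmaps) (auto simp: UT_def)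
      have "Dd h G ?C = 0"
      proof -
        have "Dd h (c0 (\<lambda>al i j. [:G al i j, ?C al i j, - yfy arr (\<lambda>v. d1 v + d2 v) Y G al i j:]))
                 (c1 (\<lambda>al i j. [:G al i j, ?C al i j, - yfy arr (\<lambda>v. d1 v + d2 v) Y G al i j:])) = 0"
        proof (rule Dd_curve_zero[OF ph])
          fix t
          have "h (cnj arr (\<lambda>v. d1 v + d2 v) (\<lambda>v. smat t (Y v)) G) = 0"
            using V N21_scale[OF NY] UG unfolding VO_def by blast
          then show "h (ccurve (\<lambda>al i j. [:G al i j, ?C al i j, - yfy arr (\<lambda>v. d1 v + d2 v) Y G al i j:]) t) = 0"
            by (simp only: conj_curve)
        qed
        then show ?thesis by (simp only: c0_curve c1_curve)
      qed
      moreover have "Dd h G ?C = Dd h G (wUU arr d1 ?C) + Dd h G (wLL arr d1 ?C)"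
        using Dd_add[OF ph] w_split by metis
      moreover have "Dd h G (wUU arr d1 ?C) = 0" by (rule base_U[OF V UG wUU_UT[OF Crep]])
      ultimately show "Dd h G (wLL arr d1 w) = 0" using LL by simp
    qed
  qed
  ultimately show ?thesis by simp
qed

lemma VO_Dd:
  fixes h g0 :: "'k::field_char_0 fam \<Rightarrow> 'k" and w G0 :: "'k fam"
  assumes V: "VO n arr d1 d2 h" and w: "is_rep arr (\<lambda>v. d1 v + d2 v) w"
    and g0: "pf g0" "UT arr d1 d2 G0" "g0 G0 \<noteq> 0"
    and good: "\<And>G. g0 G \<noteq> 0 \<Longrightarrow> esurj n arr d1 d2 (blk11 arr d1 G) (blk22 arr d1 d2 G)"
  shows "VO n arr d1 d2 (\<lambda>E. Dd h E w)"
  unfolding VO_def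
proof (intro conjI allI impI)
  have ph: "pf h" using V by (simp add: VO_def)
  show "pf (\<lambda>E. Dd h E w)" by (rule pf_Dd[OF ph])
  fix X F :: "'k fam" assume X: "N21 n d1 d2 X" and F: "UT arr d1 d2 F"
  let ?d = "\<lambda>v. d1 v + d2 v"
  define h' where "h' = (\<lambda>G. h (cnj arr ?d X G))"
  define w' where "w' = cnj arr ?d (- X) w"
  have ph': "pf h'" unfolding h'_def by (rule pf_comp[OF ph pf_conj])
  have V': "VO n arr d1 d2 h'" unfolding VO_def
  proof (intro conjI allI impI)
    show "pf h'" by (rule ph')
    fix Y G :: "'k fam" assume Y: "N21 n d1 d2 Y" and G: "UT arr d1 d2 G"
    have "h' (cnj arr ?d Y G) = h (cnj arr ?d (X + Y) G)"
      unfolding h'_def using conj_comp[OF X Y] by simp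
    also have "\<dots> = 0" using V N21_add[OF X Y] G unfolding VO_def by blast
    finally show "h' (cnj arr ?d Y G) = 0" .
  qed
  have w'r: "is_rep arr ?d w'" unfolding w'_def by (rule conj_rep[OF w N21_vmaps[OF N21_neg[OF X]]])
  have "\<And>t. h' (line F w' t) = h (line (cnj arr ?d X F) w t)"
    unfolding h'_def w'_def by (simp add: conj_line conj_inv[OF X])
  then have "Dd h (cnj arr ?d X F) w = Dd h' F w'"
    by (simp add: Dd_def)
  also have "\<dots> = 0" by (rule base_lemma[OF V' F w'r g0 good])
  finally show "Dd h (cnj arr ?d X F) w = 0" .
qed

lemma kac:
  fixes f :: "'k::field_char_0 fam \<Rightarrow> 'k" and M0 N0 E1 :: "'k fam"
  assumes M0: "is_rep arr d1 M0" and N0: "is_rep arr d2 N0" and s0: "esurj n arr d1 d2 M0 N0"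
    and pf: "pf f" and E1: "is_rep arr (\<lambda>v. d1 v + d2 v) E1" and fE1: "f E1 \<noteq> 0"
  shows "\<exists>X F. N21 n d1 d2 X \<and> UT arr d1 d2 F \<and> f (cnj arr (\<lambda>v. d1 v + d2 v) X F) \<noteq> 0"
proof (rule ccontr)
  assume "\<not> ?thesis"
  then have V: "VO n arr d1 d2 f" using pf unfolding VO_def by blast
  define G0 where "G0 = dsum arr d1 M0 N0"
  have G0: "UT arr d1 d2 G0" unfolding G0_def by (rule dsum_UT[OF M0 N0])
  have "esurj n arr d1 d2 (blk11 arr d1 G0) (blk22 arr d1 d2 G0)"
    unfolding G0_def blk11_dsum[OF M0] blk22_dsum[OF N0] by (rule s0)
  then obtain g0 where g0: "pf g0" "g0 G0 \<noteq> 0" "\<And>G. g0 G \<noteq> 0 \<Longrightarrow> esurj n arr d1 d2 (blk11 arr d1 G) (blk22 arr d1 d2 G)"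
    using open_esurj[of "blk11 arr d1" "blk22 arr d1 d2", OF pf_blk11 pf_blk22] by blast
  have VK: "VO n arr d1 d2 (iterD E1 f k)" for k
  proof (induction k)
    case 0 then show ?case using V by simp
  next
    case (Suc k)
    show ?case using VO_Dd[OF Suc E1 g0(1) G0 g0(2) g0(3)] by simp
  qed
  have "iterD E1 f k (\<lambda>al i j. 0) = 0" for k
  proof -
    have "iterD E1 f k (cnj arr (\<lambda>v. d1 v + d2 v) 0 (\<lambda>al i j. 0)) = 0"
      using VK[of k] N21_zero UT_zero unfolding VO_def by blast
    then show ?thesis by (simp add: conj_zero)
  qed
  then have "f (line (\<lambda>al i j. 0) E1 1) = 0" by (intro taylor_zero[OF pf]) auto
  moreover have "line (\<lambda>al i j. 0) E1 1 = E1" by (simp add: line_def)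
  ultimately show False using fE1 by simp
qed

lemma kac_sub:
  fixes E0 A M0 N0 :: "'k::field_char_0 fam"
  assumes M0: "is_rep arr d1 M0" and N0: "is_rep arr d2 N0" and s0: "esurj n arr d1 d2 M0 N0"
    and E0: "is_rep arr (\<lambda>v. d1 v + d2 v) E0" and A: "is_rep arr b A"
    and s: "esurj n arr (\<lambda>v. d1 v + d2 v) b E0 A"
  shows "\<exists>D. is_rep arr d1 D \<and> esurj n arr d1 b D A"
proof -
  let ?d = "\<lambda>v. d1 v + d2 v"
  obtain g where g: "pf g" "g E0 \<noteq> 0" "\<And>F. g F \<noteq> 0 \<Longrightarrow> esurj n arr ?d b F A"
    using open_esurj[of "\<lambda>F. F" "\<lambda>F. A", OF pf_var pf_const s] by blast
  obtain X F where XF: "N21 n d1 d2 X" "UT arr d1 d2 F" "g (cnj arr ?d X F) \<noteq> 0"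
    using kac[OF M0 N0 s0 g(1) E0 g(2)] by blast
  have Fr: "is_rep arr ?d F" using XF(2) by (simp add: UT_def)
  have Xv: "X \<in> vmaps n ?d ?d" by (rule N21_vmaps[OF XF(1)])
  have s1: "esurj n arr ?d b (cnj arr ?d X F) A" using g(3)[OF XF(3)] .
  have "esurj n arr ?d b (cnj arr ?d (- X) (cnj arr ?d X F)) A"
    by (rule esurj_conj_src[OF conj_rep[OF Fr Xv] A N21_vmaps[OF N21_neg[OF XF(1)]] N21_mm[OF N21_neg[OF XF(1)] N21_neg[OF XF(1)]] s1])
  then have "esurj n arr ?d b F A" by (simp add: conj_inv2[OF XF(1)])
  then have "esurj n arr d1 b (blk11 arr d1 F) A" by (rule esurj_sub[OF XF(2)])
  then show ?thesis using blk11_rep[OF Fr] by blast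
qed

lemma kac_quot:
  fixes E0 A M0 N0 :: "'k::field_char_0 fam"
  assumes M0: "is_rep arr d1 M0" and N0: "is_rep arr d2 N0" and s0: "esurj n arr d1 d2 M0 N0"
    and E0: "is_rep arr (\<lambda>v. d1 v + d2 v) E0" and A: "is_rep arr b A"
    and s: "esurj n arr b (\<lambda>v. d1 v + d2 v) A E0"
  shows "\<exists>D. is_rep arr d2 D \<and> esurj n arr b d2 A D"
proof -
  let ?d = "\<lambda>v. d1 v + d2 v"
  obtain g where g: "pf g" "g E0 \<noteq> 0" "\<And>F. g F \<noteq> 0 \<Longrightarrow> esurj n arr b ?d A F"
    using open_esurj[of "\<lambda>F. A" "\<lambda>F. F", OF pf_const pf_var s] by blast
  obtain X F where XF: "N21 n d1 d2 X" "UT arr d1 d2 F" "g (cnj arr ?d X F) \<noteq> 0"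
    using kac[OF M0 N0 s0 g(1) E0 g(2)] by blast
  have Fr: "is_rep arr ?d F" using XF(2) by (simp add: UT_def)
  have Xv: "X \<in> vmaps n ?d ?d" by (rule N21_vmaps[OF XF(1)])
  have s1: "esurj n arr b ?d A (cnj arr ?d X F)" using g(3)[OF XF(3)] .
  have "esurj n arr b ?d A (cnj arr ?d (- X) (cnj arr ?d X F))"
    by (rule esurj_conj_tgt[OF conj_rep[OF Fr Xv] A N21_vmaps[OF N21_neg[OF XF(1)]] N21_mm[OF N21_neg[OF XF(1)] N21_neg[OF XF(1)]] s1])
  then have "esurj n arr b ?d A F" by (simp add: conj_inv2[OF XF(1)])
  then have "esurj n arr b d2 A (blk22 arr d1 d2 F)" by (rule esurj_quot[OF XF(2)])
  then show ?thesis using blk22_rep[OF Fr] by blast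
qed


lemma zero_rep: "is_rep arr d (\<lambda>al i j. 0)"
  by (simp add: is_rep_def)

lemma common_src:
  fixes N :: "nat \<Rightarrow> 'k::field_char_0 fam"
  assumes I: "finite I"
    and h: "\<And>l. l \<in> I \<Longrightarrow> \<exists>M :: 'k fam. is_rep arr a M \<and> esurj n arr a (b l) M (N l)"
  shows "\<exists>M :: 'k fam. is_rep arr a M \<and> (\<forall>l\<in>I. esurj n arr a (b l) M (N l))"
proof -
  have "\<forall>l\<in>I. \<exists>g. pf g \<and> (\<exists>E\<in>{M. is_rep arr a M}. g E \<noteq> 0) \<and> (\<forall>F. g F \<noteq> 0 \<longrightarrow> esurj n arr a (b l) F (N l))"
  proof
    fix l assume l: "l \<in> I"
    obtain M :: "'k fam" where M: "is_rep arr a M" "esurj n arr a (b l) M (N l)" using h[OF l] by blast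
    obtain g where "pf g" "g M \<noteq> 0" "\<forall>F. g F \<noteq> 0 \<longrightarrow> esurj n arr a (b l) F (N l)"
      using open_esurj[of "\<lambda>F. F" "\<lambda>F. N l", OF pf_var pf_const M(2)] by blast
    then show "\<exists>g. pf g \<and> (\<exists>E\<in>{M. is_rep arr a M}. g E \<noteq> 0) \<and> (\<forall>F. g F \<noteq> 0 \<longrightarrow> esurj n arr a (b l) F (N l))"
      using M(1) by blast
  qed
  then obtain gs where gs: "\<And>l. l \<in> I \<Longrightarrow> pf (gs l) \<and> (\<exists>E\<in>{M. is_rep arr a M}. gs l E \<noteq> 0) \<and> (\<forall>F. gs l F \<noteq> 0 \<longrightarrow> esurj n arr a (b l) F (N l))"
    by metis
  obtain E where E: "E \<in> {M. is_rep arr a M}" "\<forall>l\<in>I. gs l E \<noteq> 0"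
    using common_point[OF rep_lclosed[of arr a] I, of gs] zero_rep gs by blast
  then show ?thesis using gs by blast
qed

lemma common_tgt:
  fixes M :: "nat \<Rightarrow> 'k::field_char_0 fam"
  assumes I: "finite I"
    and h: "\<And>l. l \<in> I \<Longrightarrow> \<exists>N :: 'k fam. is_rep arr b N \<and> esurj n arr (a l) b (M l) N"
  shows "\<exists>N :: 'k fam. is_rep arr b N \<and> (\<forall>l\<in>I. esurj n arr (a l) b (M l) N)"
proof -
  have "\<forall>l\<in>I. \<exists>g. pf g \<and> (\<exists>E\<in>{N. is_rep arr b N}. g E \<noteq> 0) \<and> (\<forall>F. g F \<noteq> 0 \<longrightarrow> esurj n arr (a l) b (M l) F)"
  proof
    fix l assume l: "l \<in> I"
    obtain N :: "'k fam" where N: "is_rep arr b N" "esurj n arr (a l) b (M l) N" using h[OF l] by blast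
    obtain g where "pf g" "g N \<noteq> 0" "\<forall>F. g F \<noteq> 0 \<longrightarrow> esurj n arr (a l) b (M l) F"
      using open_esurj[of "\<lambda>F. M l" "\<lambda>F. F", OF pf_const pf_var N(2)] by blast
    then show "\<exists>g. pf g \<and> (\<exists>E\<in>{N. is_rep arr b N}. g E \<noteq> 0) \<and> (\<forall>F. g F \<noteq> 0 \<longrightarrow> esurj n arr (a l) b (M l) F)"
      using N(1) by blast
  qed
  then obtain gs where gs: "\<And>l. l \<in> I \<Longrightarrow> pf (gs l) \<and> (\<exists>E\<in>{N. is_rep arr b N}. gs l E \<noteq> 0) \<and> (\<forall>F. gs l F \<noteq> 0 \<longrightarrow> esurj n arr (a l) b (M l) F)"
    by metis
  obtain E where E: "E \<in> {N. is_rep arr b N}" "\<forall>l\<in>I. gs l E \<noteq> 0"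
    using common_point[OF rep_lclosed[of arr b] I, of gs] zero_rep gs by blast
  then show ?thesis using gs by blast
qed

definition dimL :: "(nat \<Rightarrow> nat \<Rightarrow> nat) \<Rightarrow> nat list \<Rightarrow> nat \<Rightarrow> nat" where
  "dimL ds L = (\<lambda>v. sum_list (map (\<lambda>l. ds l v) L))"

lemma dimL_Nil: "dimL ds [] = (\<lambda>v. 0)" by (simp add: dimL_def)
lemma dimL_Cons: "dimL ds (l # L) = (\<lambda>v. ds l v + dimL ds L v)" by (simp add: dimL_def)

primrec dsumL :: "(nat \<times> nat) list \<Rightarrow> (nat \<Rightarrow> nat \<Rightarrow> nat) \<Rightarrow> (nat \<Rightarrow> 'k::field_char_0 fam) \<Rightarrow> nat list \<Rightarrow> 'k fam" where
  "dsumL arr ds Ns [] = (\<lambda>al i j. 0)"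
| "dsumL arr ds Ns (l # L) = dsum arr (ds l) (Ns l) (dsumL arr ds Ns L)"

lemma dsumL_rep: "(\<And>l. l \<in> set L \<Longrightarrow> is_rep arr (ds l) (Ns l)) \<Longrightarrow> is_rep arr (dimL ds L) (dsumL arr ds Ns L)"
proof (induction L)
  case Nil then show ?case by (simp add: dimL_Nil zero_rep)
next
  case (Cons l L) then show ?case unfolding dimL_Cons by (simp add: dsum_rep)
qed

lemma esurj_zero_tgt: "esurj n arr c (\<lambda>v. 0) M (\<lambda>al i j. 0)"
  unfolding esurj_def
proof (intro allI impI)
  fix \<psi> :: "'a fam" assume "hsupp arr c (\<lambda>v. 0) \<psi>"
  then have "\<psi> = (\<lambda>al i j. 0)" by (auto simp: hsupp_def fun_eq_iff)
  moreover have "(\<lambda>v i j. 0) \<in> vmaps n c (\<lambda>v. 0)" by (simp add: vmaps_def)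
  ultimately show "\<exists>\<phi>\<in>vmaps n c (\<lambda>v. 0). delta arr c (\<lambda>v. 0) M (\<lambda>al i j. 0) \<phi> = \<psi>"
    by (intro bexI[of _ "\<lambda>v i j. 0"]) (simp_all add: delta_zero)
qed

lemma esurj_zero_src: "esurj n arr (\<lambda>v. 0) c (\<lambda>al i j. 0) N"
  unfolding esurj_def
proof (intro allI impI)
  fix \<psi> :: "'a fam" assume "hsupp arr (\<lambda>v. 0) c \<psi>"
  then have "\<psi> = (\<lambda>al i j. 0)" by (auto simp: hsupp_def fun_eq_iff)
  moreover have "(\<lambda>v i j. 0) \<in> vmaps n (\<lambda>v. 0) c" by (simp add: vmaps_def)
  ultimately show "\<exists>\<phi>\<in>vmaps n (\<lambda>v. 0) c. delta arr (\<lambda>v. 0) c (\<lambda>al i j. 0) N \<phi> = \<psi>"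
    by (intro bexI[of _ "\<lambda>v i j. 0"]) (simp_all add: delta_zero)
qed

lemma esurjL_tgt:
  fixes M :: "'k::field_char_0 fam"
  shows "(\<And>l. l \<in> set L \<Longrightarrow> is_rep arr (ds l) (Ns l) \<and> esurj n arr c (ds l) M (Ns l)) \<Longrightarrow>
    esurj n arr c (dimL ds L) M (dsumL arr ds Ns L)"
proof (induction L)
  case Nil then show ?case by (simp add: dimL_Nil esurj_zero_tgt)
next
  case (Cons l L)
  have "is_rep arr (dimL ds L) (dsumL arr ds Ns L)" using Cons by (intro dsumL_rep) auto
  then show ?case unfolding dimL_Cons using Cons by (simp add: esurj_dsum_tgt)
qed

lemma esurjL_src:
  fixes N :: "'k::field_char_0 fam"
  shows "(\<And>l. l \<in> set L \<Longrightarrow> is_rep arr (ds l) (Ms l) \<and> esurj n arr (ds l) c (Ms l) N) \<Longrightarrow>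
    esurj n arr (dimL ds L) c (dsumL arr ds Ms L) N"
proof (induction L)
  case Nil then show ?case by (simp add: dimL_Nil esurj_zero_src)
next
  case (Cons l L)
  have "is_rep arr (dimL ds L) (dsumL arr ds Ms L)" using Cons by (intro dsumL_rep) auto
  then show ?case unfolding dimL_Cons using Cons by (simp add: esurj_dsum_src)
qed

lemma dimL_filter:
  assumes "j < s"
  shows "ds j v + dimL ds (filter (\<lambda>l. l \<noteq> j) [0..<s]) v = (\<Sum>l<s. ds l v)"
proof -
  have "dimL ds (filter (\<lambda>l. l \<noteq> j) [0..<s]) v = (\<Sum>l\<in>{..<s} - {j}. ds l v)"
    unfolding dimL_def by (simp add: sum_list_distinct_conv_sum_set atLeast0LessThan set_diff_eq)
  moreover have "(\<Sum>l<s. ds l v) = ds j v + (\<Sum>l\<in>{..<s} - {j}. ds l v)"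
    using assms by (simp add: sum.remove)
  ultimately show ?thesis by simp
qed


theorem mainTheorem14:
  fixes n :: nat and arr :: "(nat \<times> nat) list" and r :: nat
    and \<alpha> :: "nat \<Rightarrow> nat \<Rightarrow> nat" and \<alpha>1' :: "nat \<Rightarrow> nat"
    and s :: nat and ds :: "nat \<Rightarrow> nat \<Rightarrow> nat"
  assumes "alg_closed TYPE('k::field_char_0)"
    and "quiver n arr" and "quiver_connected n arr" and "quiver_acyclic arr"
    and "1 \<le> r"
    and "\<forall>i\<in>{1..r}. schur_root TYPE('k) n arr (\<alpha> i)"
    and "\<forall>i\<in>{1..r}. \<forall>j\<in>{1..r}. i \<noteq> j \<longrightarrow> ext_orth TYPE('k) n arr (\<alpha> i) (\<alpha> j)"
    and "schur_root TYPE('k) n arr \<alpha>1'"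
    and "\<alpha>1' \<noteq> \<alpha> 1"
    and "\<forall>i\<in>{2..r}. ext_orth TYPE('k) n arr \<alpha>1' (\<alpha> i)"
    and "ext_gen TYPE('k) n arr (\<alpha> 1) \<alpha>1' \<noteq> 0"
    and "generic_decomp TYPE('k) n arr (\<lambda>v. \<alpha> 1 v + \<alpha>1' v) s ds"
  shows "\<forall>j<s. ds j \<noteq> \<alpha> 1 \<and> ds j \<noteq> \<alpha>1' \<and>
           (\<forall>i\<in>{2..r}. ext_orth TYPE('k) n arr (ds j) (\<alpha> i))"
proof (intro allI impI)
  fix j assume js: "j < s"
  have gd2: "\<And>v. (\<Sum>l<s. ds l v) = \<alpha> 1 v + \<alpha>1' v" and
    gd3: "\<And>i j. i < s \<Longrightarrow> j < s \<Longrightarrow> i \<noteq> j \<Longrightarrow> ext_gen TYPE('k) n arr (ds i) (ds j) = 0"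
    using assms(12) by (auto simp: generic_decomp_def)
  define L where "L = filter (\<lambda>l. l \<noteq> j) [0..<s]"
  have setL: "l \<in> set L \<longleftrightarrow> l < s \<and> l \<noteq> j" for l by (auto simp: L_def)
  have finL: "finite (set L)" by simp
  have dd: "\<And>v. ds j v + dimL ds L v = \<alpha> 1 v + \<alpha>1' v"
    using dimL_filter[OF js, of ds] gd2 unfolding L_def by simp
  have ddf: "(\<lambda>v. ds j v + dimL ds L v) = (\<lambda>v. \<alpha> 1 v + \<alpha>1' v)" using dd by simp
  have ddf2: "(\<lambda>v. dimL ds L v + ds j v) = (\<lambda>v. \<alpha> 1 v + \<alpha>1' v)" using dd by (simp add: add.commute)
  have good_a: "\<exists>M0 N0 :: 'k fam. is_rep arr (ds j) M0 \<and> is_rep arr (dimL ds L) N0 \<and> esurj n arr (ds j) (dimL ds L) M0 N0"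
  proof -
    have "\<forall>l\<in>set L. \<exists>N :: 'k fam. is_rep arr (ds l) N \<and> (\<exists>M :: 'k fam. is_rep arr (ds j) M \<and> esurj n arr (ds j) (ds l) M N)"
    proof
      fix l assume l: "l \<in> set L"
      then have "ext_gen TYPE('k) n arr (ds j) (ds l) = 0" using gd3 js setL by auto
      then show "\<exists>N :: 'k fam. is_rep arr (ds l) N \<and> (\<exists>M :: 'k fam. is_rep arr (ds j) M \<and> esurj n arr (ds j) (ds l) M N)"
        unfolding ext_gen_0_iff by blast
    qed
    then obtain Ns :: "nat \<Rightarrow> 'k fam" where Ns: "\<And>l. l \<in> set L \<Longrightarrow> is_rep arr (ds l) (Ns l) \<and> (\<exists>M :: 'k fam. is_rep arr (ds j) M \<and> esurj n arr (ds j) (ds l) M (Ns l))"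
      by metis
    obtain M :: "'k fam" where M: "is_rep arr (ds j) M" "\<forall>l\<in>set L. esurj n arr (ds j) (ds l) M (Ns l)"
      using common_src[OF finL, of arr "ds j" n ds Ns] Ns by blast
    have "esurj n arr (ds j) (dimL ds L) M (dsumL arr ds Ns L)"
      using M Ns by (intro esurjL_tgt) auto
    moreover have "is_rep arr (dimL ds L) (dsumL arr ds Ns L)" using Ns by (intro dsumL_rep) auto
    ultimately show ?thesis using M(1) by blast
  qed
  have good_b: "\<exists>M0 N0 :: 'k fam. is_rep arr (dimL ds L) M0 \<and> is_rep arr (ds j) N0 \<and> esurj n arr (dimL ds L) (ds j) M0 N0"
  proof -
    have "\<forall>l\<in>set L. \<exists>M :: 'k fam. is_rep arr (ds l) M \<and> (\<exists>N :: 'k fam. is_rep arr (ds j) N \<and> esurj n arr (ds l) (ds j) M N)"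
    proof
      fix l assume l: "l \<in> set L"
      then have "ext_gen TYPE('k) n arr (ds l) (ds j) = 0" using gd3 js setL by auto
      then show "\<exists>M :: 'k fam. is_rep arr (ds l) M \<and> (\<exists>N :: 'k fam. is_rep arr (ds j) N \<and> esurj n arr (ds l) (ds j) M N)"
        unfolding ext_gen_0_iff by blast
    qed
    then obtain Ms :: "nat \<Rightarrow> 'k fam" where Ms: "\<And>l. l \<in> set L \<Longrightarrow> is_rep arr (ds l) (Ms l) \<and> (\<exists>N :: 'k fam. is_rep arr (ds j) N \<and> esurj n arr (ds l) (ds j) (Ms l) N)"
      by metis
    obtain N :: "'k fam" where N: "is_rep arr (ds j) N" "\<forall>l\<in>set L. esurj n arr (ds l) (ds j) (Ms l) N"
      using common_tgt[OF finL, of arr "ds j" n ds Ms] Ms by blast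
    have "esurj n arr (dimL ds L) (ds j) (dsumL arr ds Ms L) N"
      using N Ms by (intro esurjL_src) auto
    moreover have "is_rep arr (dimL ds L) (dsumL arr ds Ms L)" using Ms by (intro dsumL_rep) auto
    ultimately show ?thesis using N(1) by blast
  qed
  have P1: "ds j \<noteq> \<alpha> 1"
  proof
    assume eq: "ds j = \<alpha> 1"
    then have "dimL ds L = \<alpha>1'" using dd by (auto simp: fun_eq_iff)
    then have "ext_gen TYPE('k) n arr (\<alpha> 1) \<alpha>1' = 0"
      using good_a eq unfolding ext_gen_0_iff by simp
    then show False using assms(11) by simp
  qed
  have P2: "ds j \<noteq> \<alpha>1'"
  proof
    assume eq: "ds j = \<alpha>1'"
    then have "dimL ds L = \<alpha> 1" using dd by (auto simp: fun_eq_iff)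
    then have "ext_gen TYPE('k) n arr (\<alpha> 1) \<alpha>1' = 0"
      using good_b eq unfolding ext_gen_0_iff by simp
    then show False using assms(11) by simp
  qed
  have P3: "ext_orth TYPE('k) n arr (ds j) (\<alpha> i)" if i: "i \<in> {2..r}" for i
  proof -
    have o1: "ext_orth TYPE('k) n arr (\<alpha> 1) (\<alpha> i)" using assms(7) assms(5) i by auto
    have o2: "ext_orth TYPE('k) n arr \<alpha>1' (\<alpha> i)" using assms(10) i by auto
    obtain M0 N0 :: "'k fam" where ga: "is_rep arr (ds j) M0" "is_rep arr (dimL ds L) N0" "esurj n arr (ds j) (dimL ds L) M0 N0"
      using good_a by blast
    obtain M1 N1 :: "'k fam" where gb: "is_rep arr (dimL ds L) M1" "is_rep arr (ds j) N1" "esurj n arr (dimL ds L) (ds j) M1 N1"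
      using good_b by blast
    have a: "ext_gen TYPE('k) n arr (ds j) (\<alpha> i) = 0"
    proof -
      obtain A1 B1 :: "'k fam" where AB1: "is_rep arr (\<alpha> 1) A1" "is_rep arr (\<alpha> i) B1" "esurj n arr (\<alpha> 1) (\<alpha> i) A1 B1"
        using o1 unfolding ext_orth_def ext_gen_0_iff by blast
      obtain A2 B2 :: "'k fam" where AB2: "is_rep arr \<alpha>1' A2" "is_rep arr (\<alpha> i) B2" "esurj n arr \<alpha>1' (\<alpha> i) A2 B2"
        using o2 unfolding ext_orth_def ext_gen_0_iff by blast
      obtain A :: "'k fam" where A: "is_rep arr (\<alpha> i) A"
        "\<forall>l\<in>{0::nat, 1}. esurj n arr (if l = 0 then \<alpha> 1 else \<alpha>1') (\<alpha> i) (if l = 0 then A1 else A2) A"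
        using common_tgt[of "{0::nat, 1}" arr "\<alpha> i" n "\<lambda>l. if l = 0 then \<alpha> 1 else \<alpha>1'" "\<lambda>l. if l = 0 then A1 else A2"]
          AB1 AB2 by fastforce
      have sA: "esurj n arr (\<alpha> 1) (\<alpha> i) A1 A" "esurj n arr \<alpha>1' (\<alpha> i) A2 A" using A(2) by auto
      have E0: "is_rep arr (\<lambda>v. \<alpha> 1 v + \<alpha>1' v) (dsum arr (\<alpha> 1) A1 A2)" by (rule dsum_rep[OF AB1(1) AB2(1)])
      have sE: "esurj n arr (\<lambda>v. \<alpha> 1 v + \<alpha>1' v) (\<alpha> i) (dsum arr (\<alpha> 1) A1 A2) A"
        by (rule esurj_dsum_src[OF sA AB1(1) AB2(1)])
      obtain D :: "'k fam" where "is_rep arr (ds j) D" "esurj n arr (ds j) (\<alpha> i) D A"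
        using kac_sub[OF ga, of "dsum arr (\<alpha> 1) A1 A2" "\<alpha> i" A] E0 sE A(1) unfolding ddf by blast
      then show ?thesis unfolding ext_gen_0_iff using A(1) by blast
    qed
    have b: "ext_gen TYPE('k) n arr (\<alpha> i) (ds j) = 0"
    proof -
      obtain A1 B1 :: "'k fam" where AB1: "is_rep arr (\<alpha> i) A1" "is_rep arr (\<alpha> 1) B1" "esurj n arr (\<alpha> i) (\<alpha> 1) A1 B1"
        using o1 unfolding ext_orth_def ext_gen_0_iff by blast
      obtain A2 B2 :: "'k fam" where AB2: "is_rep arr (\<alpha> i) A2" "is_rep arr \<alpha>1' B2" "esurj n arr (\<alpha> i) \<alpha>1' A2 B2"
        using o2 unfolding ext_orth_def ext_gen_0_iff by blast
      obtain A :: "'k fam" where A: "is_rep arr (\<alpha> i) A"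
        "\<forall>l\<in>{0::nat, 1}. esurj n arr (\<alpha> i) (if l = 0 then \<alpha> 1 else \<alpha>1') A (if l = 0 then B1 else B2)"
        using common_src[of "{0::nat, 1}" arr "\<alpha> i" n "\<lambda>l. if l = 0 then \<alpha> 1 else \<alpha>1'" "\<lambda>l. if l = 0 then B1 else B2"]
          AB1 AB2 by fastforce
      have sA: "esurj n arr (\<alpha> i) (\<alpha> 1) A B1" "esurj n arr (\<alpha> i) \<alpha>1' A B2" using A(2) by auto
      have E0: "is_rep arr (\<lambda>v. \<alpha> 1 v + \<alpha>1' v) (dsum arr (\<alpha> 1) B1 B2)" by (rule dsum_rep[OF AB1(2) AB2(2)])
      have sE: "esurj n arr (\<alpha> i) (\<lambda>v. \<alpha> 1 v + \<alpha>1' v) A (dsum arr (\<alpha> 1) B1 B2)"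
        by (rule esurj_dsum_tgt[OF sA AB1(2) AB2(2)])
      obtain D :: "'k fam" where "is_rep arr (ds j) D" "esurj n arr (\<alpha> i) (ds j) A D"
        using kac_quot[OF gb, of "dsum arr (\<alpha> 1) B1 B2" "\<alpha> i" A] E0 sE A(1) unfolding ddf2 by blast
      then show ?thesis unfolding ext_gen_0_iff using A(1) by blast
    qed
    show ?thesis using a b by (simp add: ext_orth_def)
  qed
  show "ds j \<noteq> \<alpha> 1 \<and> ds j \<noteq> \<alpha>1' \<and> (\<forall>i\<in>{2..r}. ext_orth TYPE('k) n arr (ds j) (\<alpha> i))"
    using P1 P2 P3 by blast
qed


end
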